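(* Let $\beta>n/2$ and $\phi_\beta(r)=(1+r^2)^{-\beta}$ for $r\ge0$. Let $X=\{\mathbf{x}_j: j\in\mathbb{N}\}\subset\mathbb{R}^n$ be a set of distinct points with $\delta(X)=\inf_{j\neq k}|\mathbf{x}_j-\mathbf{x}_k|>0$ and such that the linear span of $X$ has dimension $d$, $1\le d\le n$, and let $\mathbf{S}_X(\phi_\beta)=\big[\phi_\beta(|\mathbf{x}_j-\mathbf{x}_k|)\big]_{j,k\in\mathbb{N}}$. (i) $\mathbf{S}_X(\phi_\beta)$ defines a bounded self-adjoint operator on $\ell^2(\mathbb{N})$ with $$\|\mathbf{S}_X(\phi_\beta)\|\le 1 + \frac{d(5^d -1)\, B\left(\beta-\frac d2,\,\frac d2\right)}{2 \left[\delta(X)\right]^d}.$$ (ii) If $n\ge 2$, $\mathbf{S}_X(\phi_\beta)$ defines a bounded invertible operator on $\ell^2(\mathbb{N})$. If $n=d=1$ and $\delta(X) > 2 B\left(\beta- \frac 12, \frac 12\right)$, then $\mathbf{S}_X(\phi_\beta)$ defines a bounded invertible operator on $\ell^2(\mathbb{N})$.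
   Context: $B$ denotes the Euler beta function. *)

theory Defs
  imports "HOL-Analysis.Analysis"
begin

definition l2 :: "(nat \<Rightarrow> complex) set" where
  "l2 = {a. summable (\<lambda>k. (cmod (a k))\<^sup>2)}"

definition l2norm :: "(nat \<Rightarrow> complex) \<Rightarrow> real" where
  "l2norm a = sqrt (\<Sum>k. (cmod (a k))\<^sup>2)"

definition l2inner :: "(nat \<Rightarrow> complex) \<Rightarrow> (nat \<Rightarrow> complex) \<Rightarrow> complex" where
  "l2inner a b = (\<Sum>k. a k * cnj (b k))"

definition mat_apply :: "(nat \<Rightarrow> nat \<Rightarrow> complex) \<Rightarrow> (nat \<Rightarrow> complex) \<Rightarrow> (nat \<Rightarrow> complex)" where
  "mat_apply M a = (\<lambda>j. \<Sum>k. M j k * a k)"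

definition bounded_mat_op :: "(nat \<Rightarrow> nat \<Rightarrow> complex) \<Rightarrow> real \<Rightarrow> bool" where
  "bounded_mat_op M C \<longleftrightarrow>
     (\<forall>a\<in>l2. (\<forall>j. summable (\<lambda>k. norm (M j k * a k)))
            \<and> mat_apply M a \<in> l2
            \<and> l2norm (mat_apply M a) \<le> C * l2norm a)"

definition selfadjoint_mat_op :: "(nat \<Rightarrow> nat \<Rightarrow> complex) \<Rightarrow> bool" where
  "selfadjoint_mat_op M \<longleftrightarrow>
     (\<forall>a\<in>l2. \<forall>b\<in>l2. l2inner (mat_apply M a) b = l2inner a (mat_apply M b))"

definition invertible_mat_op :: "(nat \<Rightarrow> nat \<Rightarrow> complex) \<Rightarrow> bool" where
  "invertible_mat_op M \<longleftrightarrow>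
     (\<exists>C. bounded_mat_op M C)
     \<and> bij_betw (mat_apply M) l2 l2
     \<and> (\<exists>c>0. \<forall>a\<in>l2. c * l2norm a \<le> l2norm (mat_apply M a))"

definition phi_beta :: "real \<Rightarrow> real \<Rightarrow> real" where
  "phi_beta \<beta> r = (1 + r\<^sup>2) powr (-\<beta>)"

definition sep_dist :: "(nat \<Rightarrow> 'a::metric_space) \<Rightarrow> real" where
  "sep_dist x = Inf {dist (x j) (x k) | j k. j \<noteq> k}"

definition S_mat :: "real \<Rightarrow> (nat \<Rightarrow> real ^ 'n) \<Rightarrow> nat \<Rightarrow> nat \<Rightarrow> complex" where
  "S_mat \<beta> x j k = complex_of_real (phi_beta \<beta> (norm (x j - x k)))"

end

theory Submission
  imports Defs
begin


definition Pr :: "'m set \<Rightarrow> real^'m \<Rightarrow> real^'m" where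
  "Pr D z = (\<chi> i. if i \<in> D then z$i else 0)"

definition Cyl :: "'m set \<Rightarrow> real^'m \<Rightarrow> real \<Rightarrow> (real^'m) set" where
  "Cyl D c \<rho> = {z. norm (Pr D z - c) \<le> \<rho> \<and> (\<forall>i. i \<notin> D \<longrightarrow> 0 \<le> z$i \<and> z$i \<le> 1)}"

lemma linear_Pr: "linear (Pr D)"
  unfolding Pr_def by (auto simp: linear_iff vec_eq_iff)

lemma continuous_Pr: "continuous_on S (Pr D)"
  by (simp add: linear_continuous_on linear_linear linear_Pr)

lemma compact_Cyl: "compact (Cyl D c \<rho>)"
proof -
  have cl: "closed (Cyl D c \<rho>)"
    unfolding Cyl_def
    by (intro closed_Collect_conj closed_Collect_all closed_Collect_imp closed_Collect_le
        continuous_intros continuous_on_compose2[OF continuous_Pr, of UNIV] ) auto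
  have "bounded (Cyl D c \<rho>)"
  proof -
    have "norm z \<le> real CARD('a) * (\<bar>\<rho>\<bar> + norm c + 1)" if "z \<in> Cyl D c \<rho>" for z :: "real^'a"
    proof -
      have "norm z \<le> (\<Sum>i\<in>UNIV. \<bar>z$i\<bar>)" by (rule norm_le_l1_cart)
      also have "\<dots> \<le> (\<Sum>i\<in>(UNIV::'a set). \<bar>\<rho>\<bar> + norm c + 1)"
      proof (rule sum_mono)
        fix i
        show "\<bar>z$i\<bar> \<le> \<bar>\<rho>\<bar> + norm c + 1"
        proof (cases "i \<in> D")
          case True
          have "\<bar>z$i\<bar> = \<bar>(Pr D z - c + c)$i\<bar>" using True by (simp add: Pr_def)
          also have "\<dots> \<le> norm (Pr D z - c + c)" by (rule component_le_norm_cart)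
          also have "\<dots> \<le> norm (Pr D z - c) + norm c" by (rule norm_triangle_ineq)
          finally show ?thesis using that by (auto simp: Cyl_def)
        next
          case False
          have "0 \<le> norm c" "0 \<le> \<bar>\<rho>\<bar>" by auto
          moreover have "0 \<le> z$i \<and> z$i \<le> 1" using that False by (auto simp: Cyl_def)
          ultimately show ?thesis by linarith
        qed
      qed
      finally show ?thesis by simp
    qed
    thus ?thesis unfolding bounded_iff by blast
  qed
  with cl show ?thesis using bounded_closed_imp_seq_compact compact_eq_seq_compact_metric by blast
qed

lemma Cyl_translate:
  assumes "\<And>i. i \<notin> D \<Longrightarrow> c$i = 0"
  shows "Cyl D c \<rho> = (+) c ` Cyl D 0 \<rho>"
proof -
  have PP: "Pr D (c + z) = c + Pr D z" for z
    using assms by (auto simp: Pr_def vec_eq_iff)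
  show ?thesis
  proof (rule set_eqI, rule iffI)
    fix z assume "z \<in> Cyl D c \<rho>"
    then have "z - c \<in> Cyl D 0 \<rho>" using PP[of "z - c"] assms by (auto simp: Cyl_def)
    thus "z \<in> (+) c ` Cyl D 0 \<rho>" by (intro image_eqI[of _ _ "z - c"]) auto
  next
    fix z assume "z \<in> (+) c ` Cyl D 0 \<rho>"
    then obtain w where "w \<in> Cyl D 0 \<rho>" "z = c + w" by auto
    thus "z \<in> Cyl D c \<rho>" using PP[of w] assms by (auto simp: Cyl_def)
  qed
qed

definition Lsc :: "'m set \<Rightarrow> real \<Rightarrow> real^'m \<Rightarrow> real^'m" where
  "Lsc D \<rho> z = (\<chi> i. if i \<in> D then \<rho> * z$i else z$i)"

lemma linear_Lsc: "linear (Lsc D \<rho>)"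
  unfolding Lsc_def by (auto simp: linear_iff vec_eq_iff algebra_simps)

lemma det_Lsc: "det (matrix (Lsc D \<rho>)) = \<rho> ^ card D"
proof -
  have "det (matrix (Lsc D \<rho>)) = (\<Prod>i\<in>UNIV. matrix (Lsc D \<rho>) $ i $ i)"
    by (rule det_diagonal) (auto simp: matrix_def Lsc_def axis_def)
  also have "\<dots> = (\<Prod>i\<in>UNIV. if i \<in> D then \<rho> else 1)"
    by (auto simp: matrix_def Lsc_def axis_def intro!: prod.cong)
  also have "\<dots> = \<rho> ^ card D"
    by (simp add: prod.If_cases Int_absorb1)
  finally show ?thesis .
qed

lemma Cyl_scale:
  assumes "\<rho> > 0"
  shows "Cyl D 0 \<rho> = Lsc D \<rho> ` Cyl D 0 1"
proof -
  have PL: "Pr D (Lsc D s z) = s *\<^sub>R Pr D z" for s z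
    by (auto simp: Pr_def Lsc_def vec_eq_iff)
  have LL: "Lsc D \<rho> (Lsc D (1/\<rho>) z) = z" for z
    using assms by (auto simp: Lsc_def vec_eq_iff)
  show ?thesis
  proof (rule set_eqI, rule iffI)
    fix z assume z: "z \<in> Cyl D 0 \<rho>"
    have "norm (Pr D (Lsc D (1/\<rho>) z)) \<le> 1"
      using z assms by (simp add: Cyl_def PL divide_simps)
    hence "Lsc D (1/\<rho>) z \<in> Cyl D 0 1"
      using z assms by (auto simp: Cyl_def Lsc_def)
    thus "z \<in> Lsc D \<rho> ` Cyl D 0 1" using LL[of z] by (metis image_eqI)
  next
    fix z assume "z \<in> Lsc D \<rho> ` Cyl D 0 1"
    then obtain w where w: "w \<in> Cyl D 0 1" "z = Lsc D \<rho> w" by auto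
    have "norm (Pr D z) \<le> \<rho>" using w assms by (simp add: PL Cyl_def mult_left_le)
    thus "z \<in> Cyl D 0 \<rho>" using assms w
      by (auto simp: Cyl_def Lsc_def)
  qed
qed

lemma measure_Cyl0:
  fixes D :: "'m::{finite,wellorder} set"
  assumes "\<rho> > 0"
  shows "measure lebesgue (Cyl D 0 \<rho>) = \<rho> ^ card D * measure lebesgue (Cyl D 0 1)"
proof -
  have "measure lebesgue (Lsc D \<rho> ` Cyl D 0 1) = \<bar>det (matrix (Lsc D \<rho>))\<bar> * measure lebesgue (Cyl D 0 1)"
    by (rule measure_linear_image[OF linear_Lsc lmeasurable_compact[OF compact_Cyl]])
  also have "\<bar>det (matrix (Lsc D \<rho>))\<bar> = \<rho> ^ card D" using assms by (simp only: det_Lsc) simp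
  finally show ?thesis by (simp only: Cyl_scale[OF assms])
qed

lemma measure_Cyl:
  fixes D :: "'m::{finite,wellorder} set"
  assumes "\<rho> > 0" "\<And>i. i \<notin> D \<Longrightarrow> c$i = 0"
  shows "measure lebesgue (Cyl D c \<rho>) = \<rho> ^ card D * measure lebesgue (Cyl D 0 1)"
proof -
  have "measure lebesgue (Cyl D c \<rho>) = measure lebesgue (Cyl D 0 \<rho>)"
  proof -
    have "Cyl D c \<rho> = (+) c ` Cyl D 0 \<rho>" by (rule Cyl_translate[OF assms(2)])
    thus ?thesis by (simp only: measure_translation)
  qed
  thus ?thesis using measure_Cyl0[OF assms(1)] by simp
qed

lemma measure_Cyl1_pos:
  fixes D :: "'m::{finite,wellorder} set"
  shows "measure lebesgue (Cyl D 0 1) > 0"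
proof -
  define \<eta> :: real where "\<eta> = 1 / real CARD('m)"
  have \<eta>: "\<eta> > 0" by (simp add: \<eta>_def)
  define a where "a = (\<chi> i. if i \<in> D then -\<eta> else 0)"
  define b where "b = (\<chi> i. if i \<in> D then \<eta> else 1)"
  have sub: "cbox a b \<subseteq> Cyl D 0 1"
  proof
    fix z assume z: "z \<in> cbox a b"
    hence zi: "a$i \<le> z$i \<and> z$i \<le> b$i" for i by (simp add: mem_box_cart)
    have "norm (Pr D z) \<le> (\<Sum>i\<in>UNIV. \<bar>Pr D z $ i\<bar>)" by (rule norm_le_l1_cart)
    also have "\<dots> \<le> (\<Sum>i\<in>(UNIV::'m set). \<eta>)"
      proof (rule sum_mono)
      fix i show "\<bar>Pr D z $ i\<bar> \<le> \<eta>" using zi[of i] \<eta> by (auto simp: Pr_def a_def b_def abs_le_iff split: if_splits)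
    qed
    also have "\<dots> = 1" by (simp add: \<eta>_def)
    moreover have "0 \<le> z$i \<and> z$i \<le> 1" if "i \<notin> D" for i using zi[of i] that by (simp add: a_def b_def)
    ultimately show "z \<in> Cyl D 0 1" by (auto simp: Cyl_def)
  qed
  have "measure lborel (cbox a b) > 0"
    by (auto simp: content_pos_lt_eq Basis_vec_def inner_axis a_def b_def \<eta>)
  moreover have "measure lebesgue (cbox a b) = measure lborel (cbox a b)"
    by (intro measure_completion) auto
  moreover have "measure lebesgue (cbox a b) \<le> measure lebesgue (Cyl D 0 1)"
    by (rule measure_mono_fmeasurable[OF sub]) (auto intro: lmeasurable_compact compact_Cyl)
  ultimately show ?thesis by linarith
qed

lemma packing_Cyl:
  fixes y :: "nat \<Rightarrow> real^'m::{finite,wellorder}" and D :: "'m set"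
  assumes E: "\<And>k i. i \<notin> D \<Longrightarrow> y k $ i = 0" "\<And>i. i \<notin> D \<Longrightarrow> c $ i = 0"
    and \<delta>: "\<delta> > 0"
    and sepF: "\<And>k l. k \<in> F \<Longrightarrow> l \<in> F \<Longrightarrow> k \<noteq> l \<Longrightarrow> \<delta> \<le> dist (y k) (y l)"
    and F: "finite F" and close: "\<And>k. k \<in> F \<Longrightarrow> dist (y k) c \<le> r" and r0: "r \<ge> 0"
  shows "real (card F) * (\<delta>/3) ^ card D \<le> (r + \<delta>/3) ^ card D"
proof (cases "F = {}")
  case True thus ?thesis using \<delta> r0 by simp
next
  case False
  then obtain k0 where "k0 \<in> F" by auto
  have r: "r \<ge> 0" by (rule r0)
  define m where "m = measure lebesgue (Cyl D 0 1)"
  have m: "m > 0" unfolding m_def by (rule measure_Cyl1_pos)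
  have PE: "Pr D (y k) = y k" for k using E by (auto simp: Pr_def vec_eq_iff)
  have disj: "pairwise (\<lambda>k l. disjnt (Cyl D (y k) (\<delta>/3)) (Cyl D (y l) (\<delta>/3))) F"
  proof (unfold pairwise_def disjnt_def, intro ballI impI equals0I)
    fix k l z assume kl: "k \<in> F" "l \<in> F" "k \<noteq> l" and
      "z \<in> Cyl D (y k) (\<delta>/3) \<inter> Cyl D (y l) (\<delta>/3)"
    hence zk: "z \<in> Cyl D (y k) (\<delta>/3)" and zl: "z \<in> Cyl D (y l) (\<delta>/3)" by auto
    have "dist (y k) (y l) = norm ((Pr D z - y l) - (Pr D z - y k))" by (simp add: dist_norm)
    also have "\<dots> \<le> norm (Pr D z - y l) + norm (Pr D z - y k)" by (rule norm_triangle_ineq4)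
    also have "\<dots> \<le> 2 * \<delta> / 3" using zk zl by (auto simp: Cyl_def)
    finally show False using sepF[OF kl] \<delta> by linarith
  qed
  have sub: "(\<Union>k\<in>F. Cyl D (y k) (\<delta>/3)) \<subseteq> Cyl D c (r + \<delta>/3)"
  proof (intro subsetI, elim UN_E)
    fix k z assume k: "k \<in> F" and zz: "z \<in> Cyl D (y k) (\<delta>/3)"
    hence z: "norm (Pr D z - y k) \<le> \<delta>/3" by (simp add: Cyl_def)
    have "norm (Pr D z - c) \<le> norm (Pr D z - y k) + norm (y k - c)" using norm_triangle_ineq[of "Pr D z - y k" "y k - c"] by simp
    hence "norm (Pr D z - c) \<le> r + \<delta>/3" using z close[OF k] by (simp add: dist_norm)
    thus "z \<in> Cyl D c (r + \<delta>/3)" using zz by (simp add: Cyl_def)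
  qed
  have "(\<Sum>k\<in>F. measure lebesgue (Cyl D (y k) (\<delta>/3))) = measure lebesgue (\<Union>k\<in>F. Cyl D (y k) (\<delta>/3))"
    by (rule measure_UNION'[symmetric, OF F _ disj]) (auto intro: lmeasurable_compact compact_Cyl)
  also have "\<dots> \<le> measure lebesgue (Cyl D c (r + \<delta>/3))"
    by (rule measure_mono_fmeasurable[OF sub]) (auto intro!: fmeasurableD lmeasurable_compact compact_Cyl compact_UN F)
  finally have "real (card F) * ((\<delta>/3) ^ card D * m) \<le> (r + \<delta>/3) ^ card D * m"
    using measure_Cyl[OF _ E(1), of "\<delta>/3"] measure_Cyl[OF _ E(2), of "r + \<delta>/3"] \<delta> r
    by (simp add: m_def)
  thus ?thesis using m by (simp add: mult.assoc[symmetric])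
qed

lemma count_close:
  fixes x :: "nat \<Rightarrow> real^'n"
  assumes dimX: "dim (span (range x)) = d" and dn: "d \<le> CARD('n)" and \<delta>: "\<delta> > 0"
    and sep: "\<And>k l. k \<noteq> l \<Longrightarrow> \<delta> \<le> dist (x k) (x l)" and r: "r \<ge> 0"
  shows "finite {k. dist (x k) (x j) \<le> r} \<and> real (card {k. dist (x k) (x j) \<le> r}) \<le> (1 + 3*r/\<delta>)^d"
proof -
  have "d \<le> card (UNIV :: 'n bit0 set)" using dn by simp
  then obtain D :: "'n bit0 set" where cD: "card D = d"
    using obtain_subset_with_card_n[of d "UNIV :: 'n bit0 set"] by blast
  define T where "T = {z::real^'n bit0. \<forall>i. i \<notin> D \<longrightarrow> z$i = 0}"
  have subT: "subspace T" by (auto simp: subspace_def T_def)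
  have "vec.dim T = card D" unfolding T_def by (rule dim_substandard_cart)
  hence dimT: "dim T = d" using cD dim_vec_eq[of T] by simp
  obtain f where lf: "linear f" and fV: "f ` span (range x) = T"
    and fn: "\<And>v. v \<in> span (range x) \<Longrightarrow> norm (f v) = norm v"
  proof -
    have dd: "dim (span (range x)) = dim T" using dimX dimT by simp
    show ?thesis by (rule isometry_subspaces[OF subspace_span subT dd, OF that])
  qed
  define y where "y k = f (x k)" for k
  have yT: "y k $ i = 0" if "i \<notin> D" for k i
  proof -
    have "x k \<in> span (range x)" by (rule span_base) simp
    hence "y k \<in> T" unfolding y_def using fV by blast
    thus ?thesis using that by (auto simp: T_def)
  qed
  have dy: "dist (y k) (y l) = dist (x k) (x l)" for k l
  proof -
    have "dist (y k) (y l) = norm (f (x k - x l))" by (simp add: y_def dist_norm linear_diff[OF lf])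
    also have "\<dots> = norm (x k - x l)" by (rule fn) (auto intro: span_diff span_base)
    finally show ?thesis by (simp add: dist_norm)
  qed
  define A where "A = {k. dist (x k) (x j) \<le> r}"
  have bnd: "real (card F) \<le> (1 + 3*r/\<delta>)^d" if F: "finite F" "F \<subseteq> A" for F
  proof -
    have "real (card F) * (\<delta>/3) ^ card D \<le> (r + \<delta>/3) ^ card D"
      by (rule packing_Cyl[OF yT yT \<delta> _ F(1) _ r]) (use sep F(2) in \<open>auto simp: dy A_def\<close>)
    moreover have "r + \<delta>/3 = (1 + 3*r/\<delta>) * (\<delta>/3)" using \<delta> by (simp add: field_simps)
    ultimately have "real (card F) * (\<delta>/3) ^ d \<le> (1 + 3*r/\<delta>)^d * (\<delta>/3) ^ d"
      using cD by (simp only: power_mult_distrib)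
    moreover have "(\<delta>/3) ^ d > 0" using \<delta> by simp
    ultimately show ?thesis by simp
  qed
  have fin: "finite A"
  proof (rule ccontr)
    assume "infinite A"
    then obtain F where F: "F \<subseteq> A" "finite F" "card F = Suc (nat \<lceil>(1 + 3*r/\<delta>)^d\<rceil>)"
      using infinite_arbitrarily_large by blast
    have "real (card F) \<le> (1 + 3*r/\<delta>)^d" using bnd[OF F(2,1)] .
    moreover have "real (card F) > (1 + 3*r/\<delta>)^d" using F(3) by linarith
    ultimately show False by linarith
  qed
  show ?thesis using fin bnd[OF fin] by (simp add: A_def)
qed




lemma Gamma_scaled:
  fixes a l :: real
  assumes a: "a > 0" and l: "l > 0"
  shows "((\<lambda>t. t powr (a - 1) * exp (- (l * t))) has_integral Gamma a / l powr a) {0..}"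
proof -
  let ?f = "\<lambda>t::real. t powr (a - 1) / exp t"
  have fi: "(?f has_integral Gamma a) {0..}" by (rule Gamma_integral_real[OF a])
  have fa: "?f absolutely_integrable_on {0..}"
    by (rule nonnegative_absolutely_integrable_1) (use fi in \<open>auto simp: has_integral_integrable\<close>)
  have img: "(\<lambda>s. l * s) ` {0..} = {0..}"
  proof (rule set_eqI, rule iffI)
    fix t :: real assume "t \<in> {0..}" thus "t \<in> (\<lambda>s. l * s) ` {0..}" using l
      by (intro image_eqI[of _ _ "t / l"]) auto
  qed (use l in auto)
  have der: "\<And>x. x \<in> {0..} \<Longrightarrow> ((\<lambda>s. l * s) has_field_derivative l) (at x within {0..})"
    by (auto intro!: derivative_eq_intros)
  have inj: "inj_on (\<lambda>s. l * s) {0..}" using l by (auto simp: inj_on_def)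
  have "(\<lambda>x. \<bar>l\<bar> * ?f (l * x)) absolutely_integrable_on {0..} \<and>
        integral {0..} (\<lambda>x. \<bar>l\<bar> * ?f (l * x)) = Gamma a"
    using has_absolute_integral_change_of_variables_1'[OF _ der inj, of ?f "Gamma a"] fa fi img
    by (auto simp: integral_unique)
  hence "((\<lambda>x. \<bar>l\<bar> * ?f (l * x)) has_integral Gamma a) {0..}"
    by (metis absolutely_integrable_on_def has_integral_integral)
  hence "((\<lambda>x. (1 / l powr a) * (\<bar>l\<bar> * ?f (l * x))) has_integral (1 / l powr a) * Gamma a) {0..}"
    by (rule has_integral_mult_right)
  moreover have "(1 / l powr a) * (\<bar>l\<bar> * ?f (l * x)) = x powr (a - 1) * exp (- (l * x))" if "x \<in> {0..}" for x
  proof -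
    have "(l * x) powr (a - 1) = l powr (a - 1) * x powr (a - 1)"
      using that l by (simp add: powr_mult)
    moreover have "l powr (a - 1) = l powr a / l" using l by (simp add: powr_diff)
    ultimately show ?thesis using l by (simp add: exp_minus field_simps)
  qed
  ultimately show ?thesis
    by (subst has_integral_cong[symmetric]) (auto simp: field_simps)
qed

lemma exp_tail_restrict:
  fixes t c :: real
  assumes t: "t > 0" and c: "c \<ge> 0"
  shows "((\<lambda>u. if u \<in> {c..} then t * exp (- (t * u)) else 0) has_integral exp (- (t * c))) {0..}"
proof -
  have "((\<lambda>u. exp (-t*u)) has_integral exp (-t*c)/t) {c..}"
    by (rule has_integral_exp_minus_to_infinity) (use t in auto)
  hence "((\<lambda>u. t * exp (-t*u)) has_integral t * (exp (-t*c)/t)) {c..}"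
    by (rule has_integral_mult_right)
  hence "((\<lambda>u. t * exp (- (t*u))) has_integral exp (- (t*c))) {c..}" using t by simp
  thus ?thesis using c by (subst has_integral_restrict) auto
qed

lemma gauss_sum_bound:
  fixes s :: "nat \<Rightarrow> real" and G :: "nat set"
  assumes G: "finite G"
    and cnt: "\<And>u. u \<ge> 0 \<Longrightarrow> real (card {k\<in>G. (s k)^2 \<le> u}) \<le> c0 * u powr e"
    and e: "e > 0" and t: "t > 0"
  shows "(\<Sum>k\<in>G. exp (- (t * (s k)^2))) \<le> c0 * Gamma (e+1) * t powr (-e)"
proof -
  have I1: "((\<lambda>u. \<Sum>k\<in>G. if u \<in> {(s k)^2..} then t * exp (- (t * u)) else 0)
     has_integral (\<Sum>k\<in>G. exp (- (t * (s k)^2)))) {0..}"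
    by (rule has_integral_sum[OF G]) (use t exp_tail_restrict[OF t] in \<open>auto\<close>)
  have I2: "((\<lambda>u. (c0 * t) * (u powr (e + 1 - 1) * exp (- (t * u)))) has_integral
       (c0 * t) * (Gamma (e+1) / t powr (e+1))) {0..}"
    by (rule has_integral_mult_right, rule Gamma_scaled) (use e t in auto)
  have le: "(\<Sum>k\<in>G. if u \<in> {(s k)^2..} then t * exp (- (t * u)) else 0)
      \<le> (c0 * t) * (u powr (e + 1 - 1) * exp (- (t * u)))" if u: "u \<in> {0..}" for u
  proof -
    have "(\<Sum>k\<in>G. if u \<in> {(s k)^2..} then t * exp (- (t * u)) else 0)
        = (\<Sum>k\<in>{k\<in>G. (s k)^2 \<le> u}. t * exp (- (t * u)))"
      using G by (simp add: sum.If_cases Int_def conj_commute)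
    also have "\<dots> = real (card {k\<in>G. (s k)^2 \<le> u}) * (t * exp (- (t * u)))" by simp
    also have "\<dots> \<le> (c0 * u powr e) * (t * exp (- (t * u)))"
      by (rule mult_right_mono[OF cnt]) (use u t in auto)
    finally show ?thesis by (simp add: mult_ac)
  qed
  have "(\<Sum>k\<in>G. exp (- (t * (s k)^2))) \<le> (c0 * t) * (Gamma (e+1) / t powr (e+1))"
    by (rule has_integral_le[OF I1 I2 le])
  also have "\<dots> = c0 * Gamma (e+1) * t powr (-e)"
    using t by (simp add: powr_add powr_minus field_simps)
  finally show ?thesis .
qed

lemma phi_Gamma:
  fixes \<beta> s :: real
  assumes "\<beta> > 0"
  shows "((\<lambda>t. t powr (\<beta> - 1) * exp (- t) * exp (- (t * s^2))) has_integral
          Gamma \<beta> * (1 + s^2) powr (-\<beta>)) {0..}"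
proof -
  have "((\<lambda>t. t powr (\<beta> - 1) * exp (- ((1 + s^2) * t))) has_integral Gamma \<beta> / (1 + s^2) powr \<beta>) {0..}"
    by (rule Gamma_scaled) (use assms in \<open>auto intro: add_pos_nonneg\<close>)
  moreover have "exp (- ((1 + s^2) * t)) = exp (- t) * exp (- (t * s^2))" for t
    by (simp add: algebra_simps exp_add[symmetric])
  ultimately show ?thesis by (simp add: powr_minus divide_inverse mult.assoc)
qed

lemma phi_sum_bound:
  fixes s :: "nat \<Rightarrow> real" and G :: "nat set"
  assumes G: "finite G"
    and cnt: "\<And>u. u \<ge> 0 \<Longrightarrow> real (card {k\<in>G. (s k)^2 \<le> u}) \<le> c0 * u powr e"
    and e: "e > 0" and be: "\<beta> > e"
  shows "(\<Sum>k\<in>G. (1 + (s k)^2) powr (-\<beta>)) \<le> c0 * Gamma (e+1) * Gamma (\<beta> - e) / Gamma \<beta>"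
proof -
  have b: "\<beta> > 0" using e be by linarith
  have Gb: "Gamma \<beta> > 0" using b by (rule Gamma_real_pos)
  have I1: "((\<lambda>t. \<Sum>k\<in>G. t powr (\<beta> - 1) * exp (- t) * exp (- (t * (s k)^2))) has_integral
      (\<Sum>k\<in>G. Gamma \<beta> * (1 + (s k)^2) powr (-\<beta>))) {0..}"
    by (rule has_integral_sum[OF G]) (use b in \<open>auto intro: phi_Gamma\<close>)
  have I2: "((\<lambda>t. (c0 * Gamma (e+1)) * (t powr (\<beta> - e - 1) * exp (- (1 * t)))) has_integral
      (c0 * Gamma (e+1)) * (Gamma (\<beta> - e) / 1 powr (\<beta> - e))) {0..}"
    by (rule has_integral_mult_right, rule Gamma_scaled) (use be in auto)
  have le: "(\<Sum>k\<in>G. t powr (\<beta> - 1) * exp (- t) * exp (- (t * (s k)^2)))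
     \<le> (c0 * Gamma (e+1)) * (t powr (\<beta> - e - 1) * exp (- (1 * t)))" if t: "t \<in> {0..}" for t
  proof (cases "t = 0")
    case True thus ?thesis by simp
  next
    case False
    hence t: "t > 0" using t by auto
    have "(\<Sum>k\<in>G. t powr (\<beta> - 1) * exp (- t) * exp (- (t * (s k)^2)))
        = t powr (\<beta> - 1) * exp (- t) * (\<Sum>k\<in>G. exp (- (t * (s k)^2)))"
      by (simp add: sum_distrib_left)
    also have "\<dots> \<le> t powr (\<beta> - 1) * exp (- t) * (c0 * Gamma (e+1) * t powr (-e))"
      by (rule mult_left_mono[OF gauss_sum_bound[OF G cnt e t]]) auto
    also have "\<dots> = (c0 * Gamma (e+1)) * (t powr (\<beta> - e - 1) * exp (- (1 * t)))"
      using t by (simp add: powr_add[symmetric] algebra_simps)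
    finally show ?thesis .
  qed
  have "(\<Sum>k\<in>G. Gamma \<beta> * (1 + (s k)^2) powr (-\<beta>)) \<le> (c0 * Gamma (e+1)) * (Gamma (\<beta> - e) / 1 powr (\<beta> - e))"
    by (rule has_integral_le[OF I1 I2 le])
  hence "Gamma \<beta> * (\<Sum>k\<in>G. (1 + (s k)^2) powr (-\<beta>)) \<le> c0 * Gamma (e+1) * Gamma (\<beta> - e)"
    by (simp add: sum_distrib_left)
  thus ?thesis using Gb by (simp add: field_simps)
qed




lemma four_five: "(4::real)^d \<le> 5^d - 1" if "d \<ge> 1" for d :: nat
proof -
  have "(4::nat)^d < 5^d" using that by (intro power_strict_mono) auto
  hence "(4::nat)^d + 1 \<le> 5^d" by simp
  hence "real ((4::nat)^d + 1) \<le> real (5^d)" by (rule of_nat_mono)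
  thus ?thesis by simp
qed

lemma count_bound:
  fixes x :: "nat \<Rightarrow> real^'n"
  assumes dimX: "dim (span (range x)) = d" and d1: "1 \<le> d" and dn: "d \<le> CARD('n)" and \<delta>: "\<delta> > 0"
    and sep: "\<And>k l. k \<noteq> l \<Longrightarrow> \<delta> \<le> dist (x k) (x l)"
    and G: "finite G" "j \<notin> G" and u: "u \<ge> 0"
  shows "real (card {k\<in>G. (norm (x j - x k))^2 \<le> u}) \<le> ((5 ^ d - 1) / \<delta> ^ d) * u powr (real d / 2)"
proof -
  define s where "s k = norm (x j - x k)" for k
  define c0 where "c0 = (5 ^ d - 1) / \<delta> ^ d"
  have cnt: "real (card {k\<in>G. (s k)^2 \<le> u}) \<le> c0 * u powr (real d / 2)" 
  proof (cases "u < \<delta>^2")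
    case True
    have "{k\<in>G. (s k)^2 \<le> u} = {}"
    proof (rule ccontr)
      assume "{k\<in>G. (s k)^2 \<le> u} \<noteq> {}"
      then obtain k where k: "k \<in> G" "(s k)^2 \<le> u" by auto
      have "k \<noteq> j" using k G by auto
      hence "\<delta> \<le> s k" using sep[of j k] by (simp add: s_def dist_norm)
      hence "\<delta>^2 \<le> (s k)^2" using \<delta> by (intro power_mono) auto
      thus False using k True by linarith
    qed
    moreover have "c0 \<ge> 0" unfolding c0_def using \<delta> four_five[OF d1]
      by (intro divide_nonneg_pos) (auto intro: order_trans[of 0 "4^d"])
    moreover have "0 \<le> u powr (real d / 2)" by simp
    ultimately show ?thesis by (metis card.empty of_nat_0 mult_nonneg_nonneg)
  next
    case False
    hence u\<delta>: "\<delta>^2 \<le> u" by simp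
    define \<rho> where "\<rho> = sqrt u / \<delta>"
    have "\<delta> \<le> sqrt u" using u\<delta> \<delta> by (metis abs_of_pos real_le_rsqrt)
    hence \<rho>1: "\<rho> \<ge> 1" using \<delta> by (simp add: \<rho>_def)
    have sub: "{k\<in>G. (s k)^2 \<le> u} \<subseteq> {k. dist (x k) (x j) \<le> sqrt u}"
      by (auto simp: s_def dist_norm norm_minus_commute real_le_rsqrt)
    from count_close[OF dimX dn \<delta> sep, of "sqrt u" j] u
    have cc: "finite {k. dist (x k) (x j) \<le> sqrt u}" "real (card {k. dist (x k) (x j) \<le> sqrt u}) \<le> (1 + 3 * sqrt u/\<delta>)^d"
      by auto
    have "real (card {k\<in>G. (s k)^2 \<le> u}) \<le> real (card {k. dist (x k) (x j) \<le> sqrt u})"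
      by (rule of_nat_mono, rule card_mono[OF cc(1) sub])
    also have "\<dots> \<le> (1 + 3 * \<rho>)^d" using cc(2) by (simp add: \<rho>_def)
    also have "\<dots> \<le> (4 * \<rho>)^d" using \<rho>1 by (intro power_mono) auto
    also have "\<dots> = 4^d * \<rho>^d" by (simp add: power_mult_distrib)
    also have "\<dots> \<le> (5^d - 1) * \<rho>^d" using \<rho>1 four_five[OF d1] by (intro mult_right_mono) auto
    also have "\<rho>^d = u powr (real d / 2) / \<delta>^d"
    proof -
      have "(sqrt u)^d = u powr (real d / 2)"
      proof -
        have "u > 0" using u\<delta> \<delta> by (smt (verit) zero_less_power)
        hence "(sqrt u)^d = (u powr (1/2)) powr real d"
          by (simp add: powr_half_sqrt powr_realpow)
        also have "\<dots> = u powr (real d / 2)" by (simp add: powr_powr)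
        finally show ?thesis .
      qed
      thus ?thesis by (simp add: \<rho>_def power_divide)
    qed
    finally show ?thesis by (simp add: c0_def)
  qed
  show ?thesis using cnt by (simp add: s_def c0_def)
qed

lemma row_bound:
  fixes x :: "nat \<Rightarrow> real^'n"
  assumes dimX: "dim (span (range x)) = d" and d1: "1 \<le> d" and dn: "d \<le> CARD('n)" and \<delta>: "\<delta> > 0"
    and sep: "\<And>k l. k \<noteq> l \<Longrightarrow> \<delta> \<le> dist (x k) (x l)" and \<beta>: "\<beta> > real d / 2"
    and G: "finite G" "j \<notin> G"
  shows "(\<Sum>k\<in>G. phi_beta \<beta> (norm (x j - x k)))
     \<le> real d * (5 ^ d - 1) * Beta (\<beta> - real d / 2) (real d / 2) / (2 * \<delta> ^ d)"
proof -
  define s where "s k = norm (x j - x k)" for k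
  define c0 where "c0 = (5 ^ d - 1) / \<delta> ^ d"
  have e: "real d / 2 > 0" using d1 by simp
  have cnt: "real (card {k\<in>G. (s k)^2 \<le> u}) \<le> c0 * u powr (real d / 2)" if u: "u \<ge> 0" for u
    using count_bound[OF dimX d1 dn \<delta> sep G u] by (simp add: s_def c0_def)
  have "(\<Sum>k\<in>G. (1 + (s k)^2) powr (-\<beta>)) \<le> c0 * Gamma (real d / 2 + 1) * Gamma (\<beta> - real d / 2) / Gamma \<beta>"
    by (rule phi_sum_bound[OF G(1) cnt e \<beta>])
  also have "\<dots> = real d * (5 ^ d - 1) * Beta (\<beta> - real d / 2) (real d / 2) / (2 * \<delta> ^ d)"
  proof -
    have "Gamma (real d / 2 + 1) = (real d / 2) * Gamma (real d / 2)"
      by (rule Gamma_plus1) (use e in \<open>auto elim!: nonpos_Ints_cases\<close>)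
    thus ?thesis by (simp add: c0_def Beta_def divide_simps)
  qed
  finally show ?thesis by (simp add: s_def phi_beta_def)
qed




lemma suminf_eq_infsum_nat:
  fixes g :: "nat \<Rightarrow> 'a::{banach}"
  assumes "g summable_on UNIV"
  shows "suminf g = infsum g UNIV"
proof -
  have "(g has_sum infsum g UNIV) UNIV" using assms by (rule has_sum_infsum)
  hence "g sums infsum g UNIV" by (rule has_sum_imp_sums)
  thus ?thesis by (rule sums_unique[symmetric])
qed

lemma double_suminf_swap:
  fixes f :: "nat \<Rightarrow> nat \<Rightarrow> complex"
  assumes A: "\<And>j. summable (\<lambda>k. norm (f j k))"
    and B: "summable (\<lambda>j. \<Sum>k. norm (f j k))"
  shows "(\<Sum>j. \<Sum>k. f j k) = (\<Sum>k. \<Sum>j. f j k)"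
proof -
  have N: "(\<lambda>(j,k). norm (f j k)) summable_on Sigma UNIV (\<lambda>_. UNIV)"
  proof (rule summable_on_SigmaI[where g = "\<lambda>j. \<Sum>k. norm (f j k)"])
    fix j :: nat
    show "((\<lambda>k. case (j, k) of (j, k) \<Rightarrow> norm (f j k)) has_sum (\<Sum>k. norm (f j k))) UNIV"
      using A[of j] by (auto intro!: sums_nonneg_imp_has_sum summable_sums)
  next
    show "(\<lambda>j. \<Sum>k. norm (f j k)) summable_on UNIV"
      by (rule summable_nonneg_imp_summable_on[OF B]) (auto intro: suminf_nonneg A)
  qed auto
  have S: "(\<lambda>(j,k). f j k) summable_on UNIV \<times> UNIV"
    by (rule abs_summable_summable) (use N in \<open>simp add: case_prod_unfold\<close>)
  have S': "(\<lambda>(k,j). f j k) summable_on UNIV \<times> UNIV"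
    using S by (subst summable_on_swap) (simp add: case_prod_unfold)
  have in1: "(\<lambda>k. f j k) summable_on UNIV" for j
    using summable_on_SigmaD1[of "\<lambda>j k. f j k" UNIV "\<lambda>_. UNIV" j] S by simp
  have in2: "(\<lambda>j. f j k) summable_on UNIV" for k
    using summable_on_SigmaD1[of "\<lambda>k j. f j k" UNIV "\<lambda>_. UNIV" k] S' by simp
  have out1: "(\<lambda>j. infsum (\<lambda>k. f j k) UNIV) summable_on UNIV"
    using summable_on_SigmaD[of "\<lambda>(j,k). f j k" UNIV "\<lambda>_. UNIV"] S in1 by simp
  have out2: "(\<lambda>k. infsum (\<lambda>j. f j k) UNIV) summable_on UNIV"
    using summable_on_SigmaD[of "\<lambda>(k,j). f j k" UNIV "\<lambda>_. UNIV"] S' in2 by simp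
  have "(\<Sum>j. \<Sum>k. f j k) = (\<Sum>j. infsum (\<lambda>k. f j k) UNIV)"
    by (simp add: suminf_eq_infsum_nat[OF in1])
  also have "\<dots> = infsum (\<lambda>j. infsum (\<lambda>k. f j k) UNIV) UNIV"
    by (rule suminf_eq_infsum_nat[OF out1])
  also have "\<dots> = infsum (\<lambda>k. infsum (\<lambda>j. f j k) UNIV) UNIV"
    by (rule infsum_swap_banach) (use S in simp)
  also have "\<dots> = (\<Sum>k. infsum (\<lambda>j. f j k) UNIV)"
    by (rule suminf_eq_infsum_nat[OF out2, symmetric])
  also have "\<dots> = (\<Sum>k. \<Sum>j. f j k)"
    by (simp add: suminf_eq_infsum_nat[OF in2])
  finally show ?thesis .
qed

lemma l2_summable: "a \<in> l2 \<Longrightarrow> summable (\<lambda>k. (cmod (a k))\<^sup>2)"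
  by (simp add: l2_def)

lemma l2norm_nonneg: "a \<in> l2 \<Longrightarrow> l2norm a \<ge> 0"
  unfolding l2norm_def by (rule real_sqrt_ge_zero, rule suminf_nonneg) (auto simp: l2_def)

lemma l2norm_sq: "a \<in> l2 \<Longrightarrow> (l2norm a)\<^sup>2 = (\<Sum>k. (cmod (a k))\<^sup>2)"
proof -
  assume a: "a \<in> l2"
  have "0 \<le> (\<Sum>k. (cmod (a k))\<^sup>2)" by (rule suminf_nonneg[OF l2_summable[OF a]]) simp
  thus ?thesis by (simp add: l2norm_def)
qed

lemma cs_finite:
  fixes u v :: "nat \<Rightarrow> real"
  shows "(\<Sum>k\<in>F. u k * v k) \<le> sqrt (\<Sum>k\<in>F. (u k)\<^sup>2) * sqrt (\<Sum>k\<in>F. (v k)\<^sup>2)"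
proof -
  have "(\<Sum>k\<in>F. u k * v k) \<le> \<bar>\<Sum>k\<in>F. u k * v k\<bar>" by simp
  also have "\<dots> = sqrt ((\<Sum>k\<in>F. u k * v k)\<^sup>2)" by simp
  also have "\<dots> \<le> sqrt ((\<Sum>k\<in>F. (u k)\<^sup>2) * (\<Sum>k\<in>F. (v k)\<^sup>2))"
    by (rule real_sqrt_le_mono, rule Cauchy_Schwarz_ineq_sum)
  also have "\<dots> = sqrt (\<Sum>k\<in>F. (u k)\<^sup>2) * sqrt (\<Sum>k\<in>F. (v k)\<^sup>2)"
    by (simp add: real_sqrt_mult)
  finally show ?thesis .
qed

lemma l2_prod_summable:
  assumes a: "a \<in> l2" and b: "b \<in> l2"
  shows "summable (\<lambda>k. cmod (a k) * cmod (b k))"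
    and "(\<Sum>k. cmod (a k) * cmod (b k)) \<le> l2norm a * l2norm b"
proof -
  have bnd: "(\<Sum>k<n. cmod (a k) * cmod (b k)) \<le> l2norm a * l2norm b" for n
  proof -
    have "(\<Sum>k<n. cmod (a k) * cmod (b k)) \<le> sqrt (\<Sum>k<n. (cmod (a k))\<^sup>2) * sqrt (\<Sum>k<n. (cmod (b k))\<^sup>2)"
      by (rule cs_finite)
    also have "\<dots> \<le> l2norm a * l2norm b"
    proof (rule mult_mono)
      show "sqrt (\<Sum>k<n. (cmod (a k))\<^sup>2) \<le> l2norm a" unfolding l2norm_def
        by (intro real_sqrt_le_mono sum_le_suminf l2_summable a) auto
      show "sqrt (\<Sum>k<n. (cmod (b k))\<^sup>2) \<le> l2norm b" unfolding l2norm_def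
        by (intro real_sqrt_le_mono sum_le_suminf l2_summable b) auto
    qed (auto simp: l2norm_nonneg a b intro: sum_nonneg)
    finally show ?thesis .
  qed
  show S: "summable (\<lambda>k. cmod (a k) * cmod (b k))"
    by (rule summableI_nonneg_bounded[OF _ bnd]) auto
  show "(\<Sum>k. cmod (a k) * cmod (b k)) \<le> l2norm a * l2norm b"
    by (rule suminf_le_const[OF S bnd])
qed

lemma l2_add:
  assumes a: "a \<in> l2" and b: "b \<in> l2"
  shows "(\<lambda>k. a k + b k) \<in> l2" and "l2norm (\<lambda>k. a k + b k) \<le> l2norm a + l2norm b"
proof -
  have le: "(cmod (a k + b k))\<^sup>2 \<le> (cmod (a k))\<^sup>2 + 2 * (cmod (a k) * cmod (b k)) + (cmod (b k))\<^sup>2" for k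
  proof -
    have "(cmod (a k + b k))\<^sup>2 \<le> (cmod (a k) + cmod (b k))\<^sup>2"
      by (intro power_mono norm_triangle_ineq) auto
    thus ?thesis by (simp add: power2_sum)
  qed
  have S: "summable (\<lambda>k. (cmod (a k))\<^sup>2 + 2 * (cmod (a k) * cmod (b k)) + (cmod (b k))\<^sup>2)"
    by (intro summable_add summable_mult l2_summable a b l2_prod_summable)
  have S2: "summable (\<lambda>k. (cmod (a k + b k))\<^sup>2)"
    by (rule summable_comparison_test'[OF S]) (use le in auto)
  thus "(\<lambda>k. a k + b k) \<in> l2" by (simp add: l2_def)
  have "(\<Sum>k. (cmod (a k + b k))\<^sup>2) \<le> (\<Sum>k. (cmod (a k))\<^sup>2 + 2 * (cmod (a k) * cmod (b k)) + (cmod (b k))\<^sup>2)"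
    by (rule suminf_le[OF le S2 S])
  also have "\<dots> = (\<Sum>k. (cmod (a k))\<^sup>2) + 2 * (\<Sum>k. cmod (a k) * cmod (b k)) + (\<Sum>k. (cmod (b k))\<^sup>2)"
  proof -
    have s1: "summable (\<lambda>k. (cmod (a k))\<^sup>2)" by (rule l2_summable[OF a])
    have s2: "summable (\<lambda>k. 2 * (cmod (a k) * cmod (b k)))" by (intro summable_mult l2_prod_summable a b)
    have s3: "summable (\<lambda>k. (cmod (b k))\<^sup>2)" by (rule l2_summable[OF b])
    have "(\<Sum>k. (cmod (a k))\<^sup>2 + 2 * (cmod (a k) * cmod (b k)) + (cmod (b k))\<^sup>2)
        = (\<Sum>k. (cmod (a k))\<^sup>2 + 2 * (cmod (a k) * cmod (b k))) + (\<Sum>k. (cmod (b k))\<^sup>2)"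
      by (rule suminf_add[symmetric, OF summable_add[OF s1 s2] s3])
    also have "(\<Sum>k. (cmod (a k))\<^sup>2 + 2 * (cmod (a k) * cmod (b k)))
        = (\<Sum>k. (cmod (a k))\<^sup>2) + (\<Sum>k. 2 * (cmod (a k) * cmod (b k)))"
      by (rule suminf_add[symmetric, OF s1 s2])
    also have "(\<Sum>k. 2 * (cmod (a k) * cmod (b k))) = 2 * (\<Sum>k. cmod (a k) * cmod (b k))"
      by (rule suminf_mult[OF l2_prod_summable(1)[OF a b]])
    finally show ?thesis .
  qed
  also have "\<dots> \<le> (l2norm a)\<^sup>2 + 2 * (l2norm a * l2norm b) + (l2norm b)\<^sup>2"
    using l2_prod_summable(2)[OF a b] by (simp add: l2norm_sq a b)
  also have "\<dots> = (l2norm a + l2norm b)\<^sup>2" by (simp add: power2_sum)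
  finally have "(\<Sum>k. (cmod (a k + b k))\<^sup>2) \<le> (l2norm a + l2norm b)\<^sup>2" .
  hence "sqrt (\<Sum>k. (cmod (a k + b k))\<^sup>2) \<le> sqrt ((l2norm a + l2norm b)\<^sup>2)" by (rule real_sqrt_le_mono)
  thus "l2norm (\<lambda>k. a k + b k) \<le> l2norm a + l2norm b"
    using l2norm_nonneg[OF a] l2norm_nonneg[OF b] by (simp add: l2norm_def[of "\<lambda>k. a k + b k"])
qed

lemma l2_scale:
  assumes a: "a \<in> l2"
  shows "(\<lambda>k. c * a k) \<in> l2" and "l2norm (\<lambda>k. c * a k) = cmod c * l2norm a"
proof -
  have e: "(cmod (c * a k))\<^sup>2 = (cmod c)\<^sup>2 * (cmod (a k))\<^sup>2" for k by (simp add: norm_mult power_mult_distrib)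
  show "(\<lambda>k. c * a k) \<in> l2" using summable_mult[OF l2_summable[OF a], of "(cmod c)\<^sup>2"]
    by (simp add: l2_def e)
  show "l2norm (\<lambda>k. c * a k) = cmod c * l2norm a"
  proof -
    have "(\<Sum>k. (cmod c)\<^sup>2 * (cmod (a k))\<^sup>2) = (cmod c)\<^sup>2 * (\<Sum>k. (cmod (a k))\<^sup>2)"
      by (rule suminf_mult[OF l2_summable[OF a]])
    thus ?thesis unfolding l2norm_def e by (simp add: real_sqrt_mult)
  qed
qed

lemma l2_minus: "a \<in> l2 \<Longrightarrow> (\<lambda>k. - a k) \<in> l2 \<and> l2norm (\<lambda>k. - a k) = l2norm a"
  using l2_scale[of a "-1"] by simp

lemma l2_diff:
  assumes a: "a \<in> l2" and b: "b \<in> l2"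
  shows "(\<lambda>k. a k - b k) \<in> l2" and "l2norm (\<lambda>k. a k - b k) \<le> l2norm a + l2norm b"
  using l2_add[OF a conjunct1[OF l2_minus[OF b]]] l2_minus[OF b] by simp_all

lemma l2_zero: "(\<lambda>k. 0) \<in> l2" "l2norm (\<lambda>k. 0) = 0"
  by (simp_all add: l2_def l2norm_def)

lemma l2inner_summable:
  assumes a: "a \<in> l2" and b: "b \<in> l2"
  shows "summable (\<lambda>k. norm (a k * cnj (b k)))"
  using l2_prod_summable(1)[OF a b] by (simp add: norm_mult)

lemma l2inner_bound:
  assumes a: "a \<in> l2" and b: "b \<in> l2"
  shows "cmod (l2inner a b) \<le> l2norm a * l2norm b"
proof -
  have "cmod (l2inner a b) \<le> (\<Sum>k. norm (a k * cnj (b k)))"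
    unfolding l2inner_def by (rule summable_norm[OF l2inner_summable[OF a b]])
  also have "\<dots> = (\<Sum>k. cmod (a k) * cmod (b k))" by (simp add: norm_mult)
  also have "\<dots> \<le> l2norm a * l2norm b" by (rule l2_prod_summable(2)[OF a b])
  finally show ?thesis .
qed

lemma l2_coord_le:
  assumes a: "a \<in> l2"
  shows "cmod (a k) \<le> l2norm a"
proof -
  have "(cmod (a k))\<^sup>2 \<le> (\<Sum>k. (cmod (a k))\<^sup>2)"
    using sum_le_suminf[OF l2_summable[OF a], of "{k}"] by auto
  hence "sqrt ((cmod (a k))\<^sup>2) \<le> l2norm a" unfolding l2norm_def by (rule real_sqrt_le_mono)
  thus ?thesis by simp
qed

lemma l2norm_eq0:
  assumes a: "a \<in> l2" and "l2norm a = 0"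
  shows "a k = 0"
  using l2_coord_le[OF a, of k] assms(2) by simp

lemma l2inner_self:
  assumes a: "a \<in> l2"
  shows "l2inner a a = complex_of_real ((l2norm a)\<^sup>2)"
proof -
  have "a k * cnj (a k) = complex_of_real ((cmod (a k))\<^sup>2)" for k
    by (simp add: complex_mult_cnj cmod_def)
  hence "l2inner a a = (\<Sum>k. complex_of_real ((cmod (a k))\<^sup>2))" by (simp add: l2inner_def)
  also have "\<dots> = complex_of_real (\<Sum>k. (cmod (a k))\<^sup>2)"
    by (rule suminf_of_real[OF l2_summable[OF a], symmetric])
  finally show ?thesis by (simp add: l2norm_sq a)
qed

lemma l2_norm_diff_sq:
  assumes v: "v \<in> l2" and w: "w \<in> l2"
  shows "(l2norm (\<lambda>k. v k - w k))\<^sup>2 = (l2norm v)\<^sup>2 - 2 * Re (l2inner w v) + (l2norm w)\<^sup>2"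
proof -
  have pt: "(cmod (v k - w k))\<^sup>2 = (cmod (v k))\<^sup>2 - 2 * Re (w k * cnj (v k)) + (cmod (w k))\<^sup>2" for k
  proof -
    have e1: "(cmod (v k - w k))\<^sup>2 = (Re (v k) - Re (w k))\<^sup>2 + (Im (v k) - Im (w k))\<^sup>2"
      by (simp add: cmod_power2)
    have e2: "Re (w k * cnj (v k)) = Re (w k) * Re (v k) + Im (w k) * Im (v k)" by simp
    show ?thesis unfolding e1 e2 cmod_power2 by (simp add: power2_diff)
  qed
  have sv: "summable (\<lambda>k. (cmod (v k))\<^sup>2)" and sw: "summable (\<lambda>k. (cmod (w k))\<^sup>2)"
    using v w by (simp_all add: l2_summable)
  have si: "summable (\<lambda>k. w k * cnj (v k))"
    by (rule summable_norm_cancel[OF l2inner_summable[OF w v]])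
  have sr: "summable (\<lambda>k. 2 * Re (w k * cnj (v k)))"
    by (intro summable_mult summable_Re si)
  have "(l2norm (\<lambda>k. v k - w k))\<^sup>2 = (\<Sum>k. (cmod (v k - w k))\<^sup>2)"
    by (rule l2norm_sq[OF l2_diff(1)[OF v w]])
  also have "\<dots> = (\<Sum>k. (cmod (v k))\<^sup>2 - 2 * Re (w k * cnj (v k)) + (cmod (w k))\<^sup>2)"
    by (simp only: pt)
  also have "\<dots> = (\<Sum>k. (cmod (v k))\<^sup>2 - 2 * Re (w k * cnj (v k))) + (\<Sum>k. (cmod (w k))\<^sup>2)"
    by (rule suminf_add[symmetric, OF summable_diff[OF sv sr] sw])
  also have "(\<Sum>k. (cmod (v k))\<^sup>2 - 2 * Re (w k * cnj (v k))) = (\<Sum>k. (cmod (v k))\<^sup>2) - (\<Sum>k. 2 * Re (w k * cnj (v k)))"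
    by (rule suminf_diff[symmetric, OF sv sr])
  also have "(\<Sum>k. 2 * Re (w k * cnj (v k))) = 2 * Re (l2inner w v)"
  proof -
    have "(\<Sum>k. 2 * Re (w k * cnj (v k))) = 2 * (\<Sum>k. Re (w k * cnj (v k)))"
      by (rule suminf_mult[OF summable_Re[OF si]])
    also have "(\<Sum>k. Re (w k * cnj (v k))) = Re (\<Sum>k. w k * cnj (v k))" by (rule Re_suminf[OF si, symmetric])
    finally show ?thesis unfolding l2inner_def .
  qed
  finally have X: "(l2norm (\<lambda>k. v k - w k))\<^sup>2 = (\<Sum>k. (cmod (v k))\<^sup>2) - 2 * Re (l2inner w v) + (\<Sum>k. (cmod (w k))\<^sup>2)" .
  show ?thesis unfolding l2norm_sq[OF v] l2norm_sq[OF w] by (rule X)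
qed

lemma geom_sum_le:
  fixes q :: real
  assumes "0 \<le> q" "q < 1"
  shows "(\<Sum>i\<in>{n..<p}. q ^ i) \<le> q ^ n / (1 - q)"
proof (cases "n \<le> p")
  case True
  have "(\<Sum>i\<in>{n..<p}. q ^ i) = (\<Sum>i<p - n. q ^ (n + i))"
    using True by (intro sum.reindex_bij_witness[of _ "\<lambda>i. i + n" "\<lambda>i. i - n"]) auto
  also have "\<dots> = q ^ n * (\<Sum>i<p - n. q ^ i)" by (simp add: power_add sum_distrib_left)
  also have "(\<Sum>i<p - n. q ^ i) = (1 - q ^ (p - n)) / (1 - q)"
    using assms by (simp add: sum_gp_strict)
  also have "\<dots> \<le> 1 / (1 - q)" using assms by (simp add: divide_right_mono)
  finally show ?thesis using assms by (simp add: mult_left_mono divide_inverse)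
next
  case False thus ?thesis using assms by simp
qed

lemma l2_geom_limit:
  assumes A: "\<And>n. A n \<in> l2" and q: "0 \<le> q" "q < 1"
    and D: "\<And>n. l2norm (\<lambda>k. A (Suc n) k - A n k) \<le> B * q ^ n"
  shows "\<exists>a\<in>l2. \<forall>n. (\<lambda>k. a k - A n k) \<in> l2 \<and> l2norm (\<lambda>k. a k - A n k) \<le> B * q ^ n / (1 - q)"
proof -
  have dl2: "(\<lambda>k. A p k - A n k) \<in> l2" for p n by (rule l2_diff(1)[OF A A])
  have B0: "B \<ge> 0" using D[of 0] l2norm_nonneg[OF dl2[of "Suc 0" 0]] by simp
  have tri: "l2norm (\<lambda>k. A p k - A n k) \<le> (\<Sum>i\<in>{n..<p}. B * q ^ i)" if "n \<le> p" for n p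
    using that
  proof (induction p rule: dec_induct)
    case base thus ?case using l2_zero by simp
  next
    case (step p)
    have e: "(\<lambda>k. A (Suc p) k - A n k) = (\<lambda>k. (A (Suc p) k - A p k) + (A p k - A n k))" by auto
    have "l2norm (\<lambda>k. A (Suc p) k - A n k) \<le> l2norm (\<lambda>k. A (Suc p) k - A p k) + l2norm (\<lambda>k. A p k - A n k)"
      unfolding e by (rule l2_add(2)[OF dl2 dl2])
    also have "\<dots> \<le> B * q ^ p + (\<Sum>i\<in>{n..<p}. B * q ^ i)" using D[of p] step.IH by simp
    also have "\<dots> = (\<Sum>i\<in>{n..<Suc p}. B * q ^ i)" using step.hyps by simp
    finally show ?case .
  qed
  have far: "l2norm (\<lambda>k. A p k - A n k) \<le> B * q ^ n / (1 - q)" if "n \<le> p" for n p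
  proof -
    have "(\<Sum>i\<in>{n..<p}. B * q ^ i) = B * (\<Sum>i\<in>{n..<p}. q ^ i)" by (simp add: sum_distrib_left)
    also have "\<dots> \<le> B * (q ^ n / (1 - q))" by (rule mult_left_mono[OF geom_sum_le[OF q] B0])
    finally show ?thesis using tri[OF that] by simp
  qed
  define d where "d i k = A (Suc i) k - A i k" for i k
  have dk: "cmod (d i k) \<le> B * q ^ i" for i k
    using l2_coord_le[OF dl2[of "Suc i" i], of k] D[of i] by (simp add: d_def)
  have sd: "summable (\<lambda>i. d i k)" for k
    by (rule summable_comparison_test'[where N=0, OF summable_mult[OF summable_geometric[of q]]])
       (use dk q in auto)
  define a where "a k = A 0 k + (\<Sum>i. d i k)" for k
  have Ap: "A p k = A 0 k + (\<Sum>i<p. d i k)" for p k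
    using sum_lessThan_telescope[of "\<lambda>i. A i k" p] by (simp add: d_def)
  have lim: "(\<lambda>p. A p k) \<longlonglongrightarrow> a k" for k
  proof -
    have "(\<lambda>p. A 0 k + (\<Sum>i<p. d i k)) \<longlonglongrightarrow> a k"
      unfolding a_def by (intro tendsto_add tendsto_const summable_LIMSEQ sd)
    moreover have "(\<lambda>p. A p k) = (\<lambda>p. A 0 k + (\<Sum>i<p. d i k))" by (rule ext, rule Ap)
    ultimately show ?thesis by simp
  qed
  have main: "(\<lambda>k. a k - A n k) \<in> l2 \<and> l2norm (\<lambda>k. a k - A n k) \<le> B * q ^ n / (1 - q)" for n
  proof -
    define R where "R = B * q ^ n / (1 - q)"
    have R0: "R \<ge> 0" unfolding R_def using B0 q by simp
    have part: "(\<Sum>k<K. (cmod (a k - A n k))\<^sup>2) \<le> R\<^sup>2" for K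
    proof (rule LIMSEQ_le_const2)
      show "(\<lambda>p. \<Sum>k<K. (cmod (A p k - A n k))\<^sup>2) \<longlonglongrightarrow> (\<Sum>k<K. (cmod (a k - A n k))\<^sup>2)"
        by (intro tendsto_sum tendsto_power tendsto_norm tendsto_diff lim tendsto_const)
      show "\<exists>N. \<forall>p\<ge>N. (\<Sum>k<K. (cmod (A p k - A n k))\<^sup>2) \<le> R\<^sup>2"
      proof (intro exI allI impI)
        fix p assume p: "n \<le> p"
        have "(\<Sum>k<K. (cmod (A p k - A n k))\<^sup>2) \<le> (\<Sum>k. (cmod (A p k - A n k))\<^sup>2)"
          by (rule sum_le_suminf[OF l2_summable[OF dl2]]) auto
        also have "\<dots> = (l2norm (\<lambda>k. A p k - A n k))\<^sup>2" by (rule l2norm_sq[OF dl2, symmetric])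
        also have "\<dots> \<le> R\<^sup>2" unfolding R_def
          by (rule power_mono[OF far[OF p] l2norm_nonneg[OF dl2]])
        finally show "(\<Sum>k<K. (cmod (A p k - A n k))\<^sup>2) \<le> R\<^sup>2" .
      qed
    qed
    have S: "summable (\<lambda>k. (cmod (a k - A n k))\<^sup>2)"
      by (rule summableI_nonneg_bounded[OF _ part]) simp
    have "(\<Sum>k. (cmod (a k - A n k))\<^sup>2) \<le> R\<^sup>2" by (rule suminf_le_const[OF S part])
    hence "l2norm (\<lambda>k. a k - A n k) \<le> sqrt (R\<^sup>2)" unfolding l2norm_def by (rule real_sqrt_le_mono)
    hence "l2norm (\<lambda>k. a k - A n k) \<le> R" using R0 by simp
    thus ?thesis using S by (simp add: l2_def R_def)
  qed
  have "(\<lambda>k. (a k - A 0 k) + A 0 k) \<in> l2" by (rule l2_add(1)[OF conjunct1[OF main] A])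
  hence "a \<in> l2" by simp
  thus ?thesis using main by blast
qed




lemma suminf_cnj:
  fixes f :: "nat \<Rightarrow> complex"
  assumes "summable f"
  shows "cnj (suminf f) = (\<Sum>n. cnj (f n))"
proof -
  have "(\<lambda>n. cnj (f n)) sums cnj (suminf f)" using assms by (simp add: sums_cnj summable_sums)
  thus ?thesis by (rule sums_unique)
qed

locale schur =
  fixes m :: "nat \<Rightarrow> nat \<Rightarrow> real" and C :: real
  assumes nn: "\<And>j k. m j k \<ge> 0"
    and sym: "\<And>j k. m j k = m k j"
    and rows: "\<And>j F. finite F \<Longrightarrow> (\<Sum>k\<in>F. m j k) \<le> C"
begin

definition M :: "nat \<Rightarrow> nat \<Rightarrow> complex" where "M j k = complex_of_real (m j k)"

lemma C_nonneg: "C \<ge> 0" using rows[of "{}"] by simp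

lemma m_le_C: "m j k \<le> C" using rows[of "{k}" j] by simp

lemma row_summable: "summable (\<lambda>k. m j k)"
  by (rule summableI_nonneg_bounded[OF nn]) (rule rows, simp)

lemma wsq_summable: "a \<in> l2 \<Longrightarrow> summable (\<lambda>k. m j k * (cmod (a k))\<^sup>2)"
  by (rule summable_comparison_test'[OF summable_mult[OF l2_summable, of a C]])
     (auto simp: nn mult_right_mono m_le_C)

lemma row_abs_summable:
  assumes a: "a \<in> l2"
  shows "summable (\<lambda>k. norm (M j k * a k))"
proof -
  have le: "norm (M j k * a k) \<le> (m j k + m j k * (cmod (a k))\<^sup>2) / 2" for k
  proof -
    have "0 \<le> (1 - cmod (a k))\<^sup>2" by simp
    hence "cmod (a k) \<le> (1 + (cmod (a k))\<^sup>2) / 2" by (simp add: power2_eq_square algebra_simps)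
    hence "m j k * cmod (a k) \<le> m j k * ((1 + (cmod (a k))\<^sup>2) / 2)" by (rule mult_left_mono) (rule nn)
    thus ?thesis by (simp add: M_def norm_mult abs_of_nonneg nn algebra_simps add_divide_distrib)
  qed
  have S2: "summable (\<lambda>k. (m j k + m j k * (cmod (a k))\<^sup>2) / 2)"
    by (intro summable_divide summable_add row_summable wsq_summable a)
  show ?thesis
  proof (rule summable_comparison_test'[where N=0, OF S2])
    fix n show "norm (norm (M j n * a n)) \<le> (m j n + m j n * (cmod (a n))\<^sup>2) / 2"
      using le[of n] by (simp only: real_norm_def abs_norm_cancel)
  qed
qed

lemma row_sq:
  assumes a: "a \<in> l2"
  shows "(cmod (mat_apply M a j))\<^sup>2 \<le> C * (\<Sum>k. m j k * (cmod (a k))\<^sup>2)"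
proof -
  let ?Q = "\<Sum>k. m j k * (cmod (a k))\<^sup>2"
  have Q0: "?Q \<ge> 0" by (rule suminf_nonneg[OF wsq_summable[OF a]]) (simp add: nn)
  have nrm: "norm (M j k * a k) = m j k * cmod (a k)" for k by (simp add: M_def norm_mult nn)
  have S: "summable (\<lambda>k. m j k * cmod (a k))" using row_abs_summable[OF a, of j] by (simp add: nrm)
  have part: "(\<Sum>k<n. m j k * cmod (a k)) \<le> sqrt (C * ?Q)" for n
  proof -
    have "(\<Sum>k<n. m j k * cmod (a k)) = (\<Sum>k<n. sqrt (m j k) * (sqrt (m j k) * cmod (a k)))"
      by (rule sum.cong) (auto simp: nn mult.assoc[symmetric])
    also have "\<dots> \<le> sqrt (\<Sum>k<n. (sqrt (m j k))\<^sup>2) * sqrt (\<Sum>k<n. (sqrt (m j k) * cmod (a k))\<^sup>2)"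
      by (rule cs_finite)
    also have "\<dots> = sqrt (\<Sum>k<n. m j k) * sqrt (\<Sum>k<n. m j k * (cmod (a k))\<^sup>2)"
      by (simp add: nn power_mult_distrib)
    also have "\<dots> \<le> sqrt C * sqrt ?Q"
      by (intro mult_mono real_sqrt_le_mono rows sum_le_suminf wsq_summable a)
         (auto simp: nn C_nonneg intro: sum_nonneg)
    also have "\<dots> = sqrt (C * ?Q)" by (simp add: real_sqrt_mult)
    finally show ?thesis .
  qed
  have "cmod (mat_apply M a j) \<le> (\<Sum>k. norm (M j k * a k))"
    unfolding mat_apply_def by (rule summable_norm[OF row_abs_summable[OF a]])
  also have "\<dots> = (\<Sum>k. m j k * cmod (a k))" by (simp add: nrm)
  also have "\<dots> \<le> sqrt (C * ?Q)" by (rule suminf_le_const[OF S part])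
  finally have "(cmod (mat_apply M a j))\<^sup>2 \<le> (sqrt (C * ?Q))\<^sup>2" by (intro power_mono) auto
  thus ?thesis using C_nonneg Q0 by simp
qed

lemma Q_partial:
  assumes a: "a \<in> l2"
  shows "(\<Sum>j<J. \<Sum>k. m j k * (cmod (a k))\<^sup>2) \<le> C * (l2norm a)\<^sup>2"
proof -
  have "(\<Sum>j<J. \<Sum>k. m j k * (cmod (a k))\<^sup>2) = (\<Sum>k. \<Sum>j<J. m j k * (cmod (a k))\<^sup>2)"
    by (rule suminf_sum[symmetric]) (rule wsq_summable[OF a])
  also have "\<dots> \<le> (\<Sum>k. C * (cmod (a k))\<^sup>2)"
  proof (rule suminf_le)
    fix k
    have "(\<Sum>j<J. m j k * (cmod (a k))\<^sup>2) = (\<Sum>j<J. m k j) * (cmod (a k))\<^sup>2"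
      by (simp add: sum_distrib_right sym)
    also have "\<dots> \<le> C * (cmod (a k))\<^sup>2" by (rule mult_right_mono) (auto intro: rows)
    finally show "(\<Sum>j<J. m j k * (cmod (a k))\<^sup>2) \<le> C * (cmod (a k))\<^sup>2" .
  next
    show "summable (\<lambda>k. \<Sum>j<J. m j k * (cmod (a k))\<^sup>2)"
      by (intro summable_sum wsq_summable a)
    show "summable (\<lambda>k. C * (cmod (a k))\<^sup>2)" by (intro summable_mult l2_summable a)
  qed
  also have "\<dots> = C * (l2norm a)\<^sup>2" by (simp add: suminf_mult l2_summable a l2norm_sq)
  finally show ?thesis .
qed

lemma Q_summable: "a \<in> l2 \<Longrightarrow> summable (\<lambda>j. \<Sum>k. m j k * (cmod (a k))\<^sup>2)"
  by (rule summableI_nonneg_bounded[OF _ Q_partial]) (auto intro!: suminf_nonneg wsq_summable simp: nn)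

lemma bounded:
  assumes a: "a \<in> l2"
  shows "mat_apply M a \<in> l2" and "l2norm (mat_apply M a) \<le> C * l2norm a"
proof -
  have part: "(\<Sum>j<J. (cmod (mat_apply M a j))\<^sup>2) \<le> C * (C * (l2norm a)\<^sup>2)" for J
  proof -
    have "(\<Sum>j<J. (cmod (mat_apply M a j))\<^sup>2) \<le> (\<Sum>j<J. C * (\<Sum>k. m j k * (cmod (a k))\<^sup>2))"
      by (rule sum_mono, rule row_sq[OF a])
    also have "\<dots> = C * (\<Sum>j<J. \<Sum>k. m j k * (cmod (a k))\<^sup>2)" by (simp add: sum_distrib_left)
    also have "\<dots> \<le> C * (C * (l2norm a)\<^sup>2)" by (rule mult_left_mono[OF Q_partial[OF a] C_nonneg])
    finally show ?thesis .
  qed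
  have S: "summable (\<lambda>j. (cmod (mat_apply M a j))\<^sup>2)"
    by (rule summableI_nonneg_bounded[OF _ part]) simp
  thus "mat_apply M a \<in> l2" by (simp add: l2_def)
  have "(\<Sum>j. (cmod (mat_apply M a j))\<^sup>2) \<le> C * (C * (l2norm a)\<^sup>2)" by (rule suminf_le_const[OF S part])
  also have "C * (C * (l2norm a)\<^sup>2) = (C * l2norm a)\<^sup>2" by (simp add: power2_eq_square)
  finally have "l2norm (mat_apply M a) \<le> sqrt ((C * l2norm a)\<^sup>2)"
    unfolding l2norm_def[of "mat_apply M a"] by (rule real_sqrt_le_mono)
  thus "l2norm (mat_apply M a) \<le> C * l2norm a" using C_nonneg l2norm_nonneg[OF a] by simp
qed

lemma bounded_op: "bounded_mat_op M C"
  unfolding bounded_mat_op_def using row_abs_summable bounded by blast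

lemma selfadjoint: "selfadjoint_mat_op M"
  unfolding selfadjoint_mat_op_def
proof (intro ballI)
  fix a b assume a: "a \<in> l2" and b: "b \<in> l2"
  define f where "f j k = M j k * a k * cnj (b j)" for j k
  have nf: "norm (f j k) = cmod (b j) * (m j k * cmod (a k))" for j k
    by (simp add: f_def M_def norm_mult nn)
  have rowS: "summable (\<lambda>k. m j k * cmod (a k))" for j
    using row_abs_summable[OF a, of j] by (simp add: M_def norm_mult nn)
  have A: "summable (\<lambda>k. norm (f j k))" for j
    unfolding nf by (intro summable_mult rowS)
  have B: "summable (\<lambda>j. \<Sum>k. norm (f j k))"
  proof -
    have e: "(\<Sum>k. norm (f j k)) = cmod (b j) * (\<Sum>k. m j k * cmod (a k))" for j
      unfolding nf by (rule suminf_mult[OF rowS])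
    have le: "cmod (b j) * (\<Sum>k. m j k * cmod (a k)) \<le> ((cmod (b j))\<^sup>2 + C * (\<Sum>k. m j k * (cmod (a k))\<^sup>2)) / 2" for j
    proof -
      let ?R = "\<Sum>k. m j k * cmod (a k)"
      have "?R\<^sup>2 \<le> C * (\<Sum>k. m j k * (cmod (a k))\<^sup>2)"
      proof -
        have "mat_apply M (\<lambda>k. complex_of_real (cmod (a k))) j = complex_of_real ?R"
          unfolding mat_apply_def M_def of_real_mult[symmetric] by (rule suminf_of_real[OF rowS, symmetric])
        moreover have "?R \<ge> 0" by (rule suminf_nonneg[OF rowS]) (simp add: nn)
        ultimately have "cmod (mat_apply M (\<lambda>k. complex_of_real (cmod (a k))) j) = ?R" by simp
        moreover have "(\<lambda>k. complex_of_real (cmod (a k))) \<in> l2" using a by (simp add: l2_def)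
        ultimately show ?thesis using row_sq[of "\<lambda>k. complex_of_real (cmod (a k))" j] by simp
      qed
      moreover have "cmod (b j) * ?R \<le> ((cmod (b j))\<^sup>2 + ?R\<^sup>2) / 2"
      proof -
        have "0 \<le> (cmod (b j) - ?R)\<^sup>2" by simp
        thus ?thesis by (simp add: power2_eq_square algebra_simps)
      qed
      ultimately show ?thesis
        by (meson add_left_mono divide_right_mono order_trans zero_le_numeral)
    qed
    have S2: "summable (\<lambda>j. ((cmod (b j))\<^sup>2 + C * (\<Sum>k. m j k * (cmod (a k))\<^sup>2)) / 2)"
      by (intro summable_divide summable_add l2_summable b summable_mult Q_summable a)
    show ?thesis unfolding e
    proof (rule summable_comparison_test'[where N=0, OF S2])
      fix j
      have "0 \<le> (\<Sum>k. m j k * cmod (a k))" by (rule suminf_nonneg[OF rowS]) (simp add: nn)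
      hence "norm (cmod (b j) * (\<Sum>k. m j k * cmod (a k))) = cmod (b j) * (\<Sum>k. m j k * cmod (a k))"
        by simp
      thus "norm (cmod (b j) * (\<Sum>k. m j k * cmod (a k))) \<le> ((cmod (b j))\<^sup>2 + C * (\<Sum>k. m j k * (cmod (a k))\<^sup>2)) / 2"
        using le[of j] by (simp only:)
    qed
  qed
  have "l2inner (mat_apply M a) b = (\<Sum>j. \<Sum>k. f j k)"
    unfolding l2inner_def mat_apply_def f_def
    by (rule suminf_cong, rule suminf_mult2) (rule summable_norm_cancel[OF row_abs_summable[OF a]])
  also have "\<dots> = (\<Sum>k. \<Sum>j. f j k)" by (rule double_suminf_swap[OF A B])
  also have "\<dots> = l2inner a (mat_apply M b)"
    unfolding l2inner_def mat_apply_def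
  proof (rule suminf_cong)
    fix k
    have Sb: "summable (\<lambda>j. M k j * b j)" by (rule summable_norm_cancel[OF row_abs_summable[OF b]])
    have "a k * cnj (\<Sum>j. M k j * b j) = a k * (\<Sum>j. cnj (M k j * b j))" by (simp add: suminf_cnj[OF Sb])
    also have "\<dots> = (\<Sum>j. a k * cnj (M k j * b j))"
    proof (rule suminf_mult[symmetric])
      have "(\<lambda>j. cnj (M k j * b j)) sums cnj (\<Sum>j. M k j * b j)"
        by (rule sums_cnj[THEN iffD2, OF summable_sums[OF Sb]])
      thus "summable (\<lambda>j. cnj (M k j * b j))" by (rule sums_summable)
    qed
    also have "\<dots> = (\<Sum>j. f j k)" by (simp add: f_def M_def sym[of k] mult_ac)
    finally show "(\<Sum>j. f j k) = a k * cnj (\<Sum>j. M k j * b j)" by simp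
  qed
  finally show "l2inner (mat_apply M a) b = l2inner a (mat_apply M b)" .
qed

lemma row_summable_c: "a \<in> l2 \<Longrightarrow> summable (\<lambda>k. M j k * a k)"
  by (rule summable_norm_cancel[OF row_abs_summable])

lemma mat_diff:
  assumes a: "a \<in> l2" and b: "b \<in> l2"
  shows "mat_apply M (\<lambda>k. a k - b k) = (\<lambda>j. mat_apply M a j - mat_apply M b j)"
proof (rule ext)
  fix j
  have "mat_apply M (\<lambda>k. a k - b k) j = (\<Sum>k. M j k * a k - M j k * b k)"
    by (simp add: mat_apply_def algebra_simps)
  also have "\<dots> = mat_apply M a j - mat_apply M b j"
    unfolding mat_apply_def by (rule suminf_diff[symmetric, OF row_summable_c[OF a] row_summable_c[OF b]])
  finally show "mat_apply M (\<lambda>k. a k - b k) j = mat_apply M a j - mat_apply M b j" .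
qed

lemma mat_scale:
  assumes a: "a \<in> l2"
  shows "mat_apply M (\<lambda>k. e * a k) = (\<lambda>j. e * mat_apply M a j)"
proof (rule ext)
  fix j
  have "mat_apply M (\<lambda>k. e * a k) j = (\<Sum>k. e * (M j k * a k))"
    by (simp add: mat_apply_def mult_ac)
  also have "\<dots> = e * mat_apply M a j"
    unfolding mat_apply_def by (rule suminf_mult[OF row_summable_c[OF a]])
  finally show "mat_apply M (\<lambda>k. e * a k) j = e * mat_apply M a j" .
qed

lemma mat_zero: "mat_apply M (\<lambda>k. 0) = (\<lambda>j. 0)"
  by (simp add: mat_apply_def)

end

lemma l2inner_diff_left:
  assumes "p \<in> l2" "q \<in> l2" "r \<in> l2"
  shows "l2inner p r - l2inner q r = l2inner (\<lambda>k. p k - q k) r"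
  unfolding l2inner_def
  by (subst suminf_diff[OF summable_norm_cancel[OF l2inner_summable[OF assms(1,3)]]
        summable_norm_cancel[OF l2inner_summable[OF assms(2,3)]]]) (simp add: algebra_simps)

lemma l2inner_diff_right:
  assumes "p \<in> l2" "r \<in> l2" "s \<in> l2"
  shows "l2inner p r - l2inner p s = l2inner p (\<lambda>k. r k - s k)"
  unfolding l2inner_def
  by (subst suminf_diff[OF summable_norm_cancel[OF l2inner_summable[OF assms(1,2)]]
        summable_norm_cancel[OF l2inner_summable[OF assms(1,3)]]]) (simp add: algebra_simps)

lemma trunc_l2:
  fixes N :: nat
  assumes a: "a \<in> l2"
  defines "aN \<equiv> (\<lambda>k. if k < N then a k else 0)"
  shows "aN \<in> l2" "l2norm aN \<le> l2norm a"
    "(l2norm (\<lambda>k. a k - aN k))\<^sup>2 = (\<Sum>k. (cmod (a k))\<^sup>2) - (\<Sum>k<N. (cmod (a k))\<^sup>2)"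
    "(l2norm aN)\<^sup>2 = (\<Sum>k<N. (cmod (a k))\<^sup>2)"
proof -
  have fin: "(\<Sum>k. (cmod (aN k))\<^sup>2) = (\<Sum>k<N. (cmod (a k))\<^sup>2)"
    by (subst suminf_finite[of "{..<N}"]) (auto simp: aN_def)
  have S: "summable (\<lambda>k. (cmod (aN k))\<^sup>2)"
    by (rule summable_finite[of "{..<N}"]) (auto simp: aN_def)
  show l: "aN \<in> l2" using S by (simp add: l2_def)
  show "(l2norm aN)\<^sup>2 = (\<Sum>k<N. (cmod (a k))\<^sup>2)" using l2norm_sq[OF l] fin by simp
  have "(\<Sum>k<N. (cmod (a k))\<^sup>2) \<le> (\<Sum>k. (cmod (a k))\<^sup>2)"
    by (rule sum_le_suminf[OF l2_summable[OF a]]) auto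
  thus "l2norm aN \<le> l2norm a" unfolding l2norm_def fin by (rule real_sqrt_le_mono)
  have e: "(cmod (a k - aN k))\<^sup>2 = (cmod (a k))\<^sup>2 - (cmod (aN k))\<^sup>2" for k by (simp add: aN_def)
  have "(\<Sum>k. (cmod (a k - aN k))\<^sup>2) = (\<Sum>k. (cmod (a k))\<^sup>2) - (\<Sum>k. (cmod (aN k))\<^sup>2)"
    unfolding e by (rule suminf_diff[symmetric, OF l2_summable[OF a] S])
  thus "(l2norm (\<lambda>k. a k - aN k))\<^sup>2 = (\<Sum>k. (cmod (a k))\<^sup>2) - (\<Sum>k<N. (cmod (a k))\<^sup>2)"
    using l2norm_sq[OF l2_diff(1)[OF a l]] fin by simp
qed

context schur
begin

lemma finite_form:
  fixes N :: nat
  assumes a: "a \<in> l2"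
  defines "aN \<equiv> (\<lambda>k. if k < N then a k else 0)"
  shows "Re (l2inner (mat_apply M aN) aN) =
    (\<Sum>j<N. \<Sum>k<N. Re (a j) * Re (a k) * m j k) + (\<Sum>j<N. \<Sum>k<N. Im (a j) * Im (a k) * m j k)"
proof -
  have MaN: "mat_apply M aN j = (\<Sum>k<N. M j k * a k)" for j
    unfolding mat_apply_def by (subst suminf_finite[of "{..<N}"]) (auto simp: aN_def)
  have "l2inner (mat_apply M aN) aN = (\<Sum>j<N. mat_apply M aN j * cnj (a j))"
    unfolding l2inner_def by (subst suminf_finite[of "{..<N}"]) (auto simp: aN_def)
  also have "\<dots> = (\<Sum>j<N. \<Sum>k<N. M j k * a k * cnj (a j))"
    by (simp add: MaN sum_distrib_right)
  finally have "Re (l2inner (mat_apply M aN) aN) = (\<Sum>j<N. \<Sum>k<N. m j k * (Re (a k) * Re (a j) + Im (a k) * Im (a j)))"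
    by (simp add: M_def Re_sum distrib_left mult_ac)
  also have "\<dots> = (\<Sum>j<N. \<Sum>k<N. Re (a j) * Re (a k) * m j k) + (\<Sum>j<N. \<Sum>k<N. Im (a j) * Im (a k) * m j k)"
    by (simp add: sum.distrib[symmetric] algebra_simps)
  finally show ?thesis .
qed

lemma coercive_from_finite:
  assumes c0: "c > 0"
    and fin: "\<And>N u. c * (\<Sum>j<N. (u j)\<^sup>2) \<le> (\<Sum>j<N. \<Sum>k<N. u j * u k * m j k)"
    and a: "a \<in> l2"
  shows "c * (l2norm a)\<^sup>2 \<le> Re (l2inner (mat_apply M a) a)"
proof -
  define aN where "aN N = (\<lambda>k. if k < N then a k else 0)" for N
  have aNl2: "aN N \<in> l2" for N unfolding aN_def by (rule trunc_l2(1)[OF a])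
  have Ma: "mat_apply M a \<in> l2" by (rule bounded(1)[OF a])
  define err where "err N = l2norm (\<lambda>k. a k - aN N k)" for N
  have errl2: "(\<lambda>k. a k - aN N k) \<in> l2" for N by (rule l2_diff(1)[OF a aNl2])
  have low: "c * (\<Sum>k<N. (cmod (a k))\<^sup>2) - 2 * C * l2norm a * err N \<le> Re (l2inner (mat_apply M a) a)" for N
  proof -
    have "c * (\<Sum>k<N. (cmod (a k))\<^sup>2) = c * (\<Sum>j<N. (Re (a j))\<^sup>2) + c * (\<Sum>j<N. (Im (a j))\<^sup>2)"
      by (simp add: cmod_power2 sum.distrib algebra_simps)
    also have "\<dots> \<le> Re (l2inner (mat_apply M (aN N)) (aN N))"
      unfolding aN_def finite_form[OF a] by (intro add_mono fin)
    finally have f1: "c * (\<Sum>k<N. (cmod (a k))\<^sup>2) \<le> Re (l2inner (mat_apply M (aN N)) (aN N))" .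
    have MaN: "mat_apply M (aN N) \<in> l2" by (rule bounded(1)[OF aNl2])
    have "l2inner (mat_apply M a) a - l2inner (mat_apply M (aN N)) (aN N)
        = (l2inner (mat_apply M a) a - l2inner (mat_apply M (aN N)) a)
          + (l2inner (mat_apply M (aN N)) a - l2inner (mat_apply M (aN N)) (aN N))" by simp
    also have "\<dots> = l2inner (mat_apply M (\<lambda>k. a k - aN N k)) a + l2inner (mat_apply M (aN N)) (\<lambda>k. a k - aN N k)"
      by (simp add: l2inner_diff_left[OF Ma MaN a] l2inner_diff_right[OF MaN a aNl2] mat_diff[OF a aNl2])
    finally have dif: "l2inner (mat_apply M a) a - l2inner (mat_apply M (aN N)) (aN N)
        = l2inner (mat_apply M (\<lambda>k. a k - aN N k)) a + l2inner (mat_apply M (aN N)) (\<lambda>k. a k - aN N k)" .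
    have b1: "cmod (l2inner (mat_apply M (\<lambda>k. a k - aN N k)) a) \<le> C * err N * l2norm a"
    proof -
      have "cmod (l2inner (mat_apply M (\<lambda>k. a k - aN N k)) a) \<le> l2norm (mat_apply M (\<lambda>k. a k - aN N k)) * l2norm a"
        by (rule l2inner_bound[OF bounded(1)[OF errl2] a])
      also have "\<dots> \<le> (C * err N) * l2norm a"
        unfolding err_def by (rule mult_right_mono[OF bounded(2)[OF errl2] l2norm_nonneg[OF a]])
      finally show ?thesis .
    qed
    have b2: "cmod (l2inner (mat_apply M (aN N)) (\<lambda>k. a k - aN N k)) \<le> C * l2norm a * err N"
    proof -
      have "cmod (l2inner (mat_apply M (aN N)) (\<lambda>k. a k - aN N k)) \<le> l2norm (mat_apply M (aN N)) * err N"
        unfolding err_def by (rule l2inner_bound[OF MaN errl2])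
      also have "\<dots> \<le> (C * l2norm a) * err N"
      proof (rule mult_right_mono)
        have "l2norm (mat_apply M (aN N)) \<le> C * l2norm (aN N)" by (rule bounded(2)[OF aNl2])
        also have "\<dots> \<le> C * l2norm a" unfolding aN_def by (rule mult_left_mono[OF trunc_l2(2)[OF a] C_nonneg])
        finally show "l2norm (mat_apply M (aN N)) \<le> C * l2norm a" .
        show "0 \<le> err N" unfolding err_def by (rule l2norm_nonneg[OF errl2])
      qed
      finally show ?thesis .
    qed
    have "Re (l2inner (mat_apply M (aN N)) (aN N)) - Re (l2inner (mat_apply M a) a)
        \<le> cmod (l2inner (mat_apply M a) a - l2inner (mat_apply M (aN N)) (aN N))"
      by (metis abs_Re_le_cmod abs_le_iff minus_complex.sel(1) minus_diff_eq)
    also have "\<dots> \<le> cmod (l2inner (mat_apply M (\<lambda>k. a k - aN N k)) a) + cmod (l2inner (mat_apply M (aN N)) (\<lambda>k. a k - aN N k))"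
      unfolding dif by (rule norm_triangle_ineq)
    also have "\<dots> \<le> C * l2norm a * err N + C * l2norm a * err N"
      by (rule add_mono) (use b1 b2 in \<open>simp_all add: mult_ac\<close>)
    also have "\<dots> = 2 * C * l2norm a * err N" by simp
    finally show ?thesis using f1 by simp
  qed
  have errlim: "err \<longlonglongrightarrow> 0"
  proof -
    have "(\<lambda>N. (\<Sum>k. (cmod (a k))\<^sup>2) - (\<Sum>k<N. (cmod (a k))\<^sup>2)) \<longlonglongrightarrow> (\<Sum>k. (cmod (a k))\<^sup>2) - (\<Sum>k. (cmod (a k))\<^sup>2)"
      by (intro tendsto_diff tendsto_const summable_LIMSEQ l2_summable a)
    hence "(\<lambda>N. sqrt ((\<Sum>k. (cmod (a k))\<^sup>2) - (\<Sum>k<N. (cmod (a k))\<^sup>2))) \<longlonglongrightarrow> sqrt 0"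
      by (intro tendsto_real_sqrt) simp
    moreover have E: "err N = sqrt ((\<Sum>k. (cmod (a k))\<^sup>2) - (\<Sum>k<N. (cmod (a k))\<^sup>2))" for N
    proof -
      have "(err N)\<^sup>2 = (\<Sum>k. (cmod (a k))\<^sup>2) - (\<Sum>k<N. (cmod (a k))\<^sup>2)"
        unfolding err_def aN_def by (rule trunc_l2(3)[OF a])
      moreover have "err N \<ge> 0" unfolding err_def by (rule l2norm_nonneg[OF errl2])
      ultimately show ?thesis by (metis real_sqrt_abs abs_of_nonneg)
    qed
    hence "err = (\<lambda>N. sqrt ((\<Sum>k. (cmod (a k))\<^sup>2) - (\<Sum>k<N. (cmod (a k))\<^sup>2)))" by (simp add: fun_eq_iff)
    ultimately show ?thesis by simp
  qed
  have "(\<lambda>N. c * (\<Sum>k<N. (cmod (a k))\<^sup>2) - 2 * C * l2norm a * err N) \<longlonglongrightarrow> c * (\<Sum>k. (cmod (a k))\<^sup>2) - 2 * C * l2norm a * 0"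
    by (intro tendsto_diff tendsto_mult tendsto_const summable_LIMSEQ l2_summable a errlim)
  hence "c * (\<Sum>k. (cmod (a k))\<^sup>2) - 2 * C * l2norm a * 0 \<le> Re (l2inner (mat_apply M a) a)"
    by (rule LIMSEQ_le_const2) (use low in auto)
  thus ?thesis by (simp add: l2norm_sq[OF a])
qed

end

lemma l2inner_scale_left:
  assumes "w \<in> l2" "v \<in> l2"
  shows "l2inner (\<lambda>k. e * w k) v = e * l2inner w v"
  unfolding l2inner_def
  by (simp add: mult.assoc suminf_mult[OF summable_norm_cancel[OF l2inner_summable[OF assms]]])

locale coercive = schur +
  fixes c :: real
  assumes c_pos: "c > 0"
    and coerc: "\<And>a. a \<in> l2 \<Longrightarrow> c * (l2norm a)\<^sup>2 \<le> Re (l2inner (mat_apply M a) a)"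
begin

lemma lower: "a \<in> l2 \<Longrightarrow> c * l2norm a \<le> l2norm (mat_apply M a)"
proof -
  assume a: "a \<in> l2"
  have "c * (l2norm a)\<^sup>2 \<le> Re (l2inner (mat_apply M a) a)" by (rule coerc[OF a])
  also have "\<dots> \<le> cmod (l2inner (mat_apply M a) a)" by (rule complex_Re_le_cmod)
  also have "\<dots> \<le> l2norm (mat_apply M a) * l2norm a" by (rule l2inner_bound[OF bounded(1)[OF a] a])
  finally have X: "(c * l2norm a) * l2norm a \<le> l2norm (mat_apply M a) * l2norm a"
    by (simp add: power2_eq_square mult_ac)
  show ?thesis
  proof (cases "l2norm a = 0")
    case True thus ?thesis using l2norm_nonneg[OF bounded(1)[OF a]] by simp
  next
    case False
    hence "l2norm a > 0" using l2norm_nonneg[OF a] by simp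
    thus ?thesis using X by simp
  qed
qed

lemma c_le_C: "c \<le> C"
proof -
  define u :: "nat \<Rightarrow> complex" where "u k = (if k = 0 then 1 else 0)" for k
  have su: "(\<Sum>k. (cmod (u k))\<^sup>2) = 1"
    by (subst suminf_finite[of "{0}"]) (auto simp: u_def)
  have "summable (\<lambda>k. (cmod (u k))\<^sup>2)"
    by (rule summable_finite[of "{0}"]) (auto simp: u_def split: if_splits)
  hence u: "u \<in> l2" by (simp add: l2_def)
  have n1: "l2norm u = 1" by (simp add: l2norm_def su)
  have "c * l2norm u \<le> l2norm (mat_apply M u)" by (rule lower[OF u])
  also have "\<dots> \<le> C * l2norm u" by (rule bounded(2)[OF u])
  finally show ?thesis using n1 by simp
qed

lemma C_pos: "C > 0" using c_le_C c_pos by linarith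

lemma injective: "inj_on (mat_apply M) l2"
proof (rule inj_onI)
  fix a b assume a: "a \<in> l2" and b: "b \<in> l2" and eq: "mat_apply M a = mat_apply M b"
  have d: "(\<lambda>k. a k - b k) \<in> l2" by (rule l2_diff(1)[OF a b])
  have "c * l2norm (\<lambda>k. a k - b k) \<le> l2norm (mat_apply M (\<lambda>k. a k - b k))" by (rule lower[OF d])
  also have "mat_apply M (\<lambda>k. a k - b k) = (\<lambda>k. 0)" by (simp add: mat_diff[OF a b] eq)
  finally have "l2norm (\<lambda>k. a k - b k) \<le> 0" using c_pos l2_zero by (simp add: mult_le_0_iff)
  hence "l2norm (\<lambda>k. a k - b k) = 0" using l2norm_nonneg[OF d] by linarith
  hence "a k - b k = 0" for k by (rule l2norm_eq0[OF d])
  thus "a = b" by auto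
qed

lemma contraction:
  assumes v: "v \<in> l2"
  defines "\<epsilon> \<equiv> c / C\<^sup>2"
  shows "l2norm (\<lambda>k. v k - complex_of_real \<epsilon> * mat_apply M v k) \<le> sqrt (1 - c\<^sup>2 / C\<^sup>2) * l2norm v"
proof -
  have Mv: "mat_apply M v \<in> l2" by (rule bounded(1)[OF v])
  have eMv: "(\<lambda>k. complex_of_real \<epsilon> * mat_apply M v k) \<in> l2" by (rule l2_scale(1)[OF Mv])
  have \<epsilon>0: "\<epsilon> \<ge> 0" unfolding \<epsilon>_def using c_pos by simp
  have "(l2norm (\<lambda>k. v k - complex_of_real \<epsilon> * mat_apply M v k))\<^sup>2
      = (l2norm v)\<^sup>2 - 2 * Re (l2inner (\<lambda>k. complex_of_real \<epsilon> * mat_apply M v k) v)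
        + (l2norm (\<lambda>k. complex_of_real \<epsilon> * mat_apply M v k))\<^sup>2"
    by (rule l2_norm_diff_sq[OF v eMv])
  also have "Re (l2inner (\<lambda>k. complex_of_real \<epsilon> * mat_apply M v k) v) = \<epsilon> * Re (l2inner (mat_apply M v) v)"
    by (simp add: l2inner_scale_left[OF Mv v])
  also have "l2norm (\<lambda>k. complex_of_real \<epsilon> * mat_apply M v k) = \<epsilon> * l2norm (mat_apply M v)"
    using l2_scale(2)[OF Mv, of "complex_of_real \<epsilon>"] \<epsilon>0 by simp
  finally have E: "(l2norm (\<lambda>k. v k - complex_of_real \<epsilon> * mat_apply M v k))\<^sup>2
      = (l2norm v)\<^sup>2 - 2 * (\<epsilon> * Re (l2inner (mat_apply M v) v)) + (\<epsilon> * l2norm (mat_apply M v))\<^sup>2" .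
  have R: "c * (l2norm v)\<^sup>2 \<le> Re (l2inner (mat_apply M v) v)" by (rule coerc[OF v])
  have N: "(\<epsilon> * l2norm (mat_apply M v))\<^sup>2 \<le> (\<epsilon> * (C * l2norm v))\<^sup>2"
    by (intro power_mono mult_left_mono bounded(2)[OF v] \<epsilon>0 mult_nonneg_nonneg l2norm_nonneg Mv)
  have "(l2norm (\<lambda>k. v k - complex_of_real \<epsilon> * mat_apply M v k))\<^sup>2
      \<le> (l2norm v)\<^sup>2 - 2 * (\<epsilon> * (c * (l2norm v)\<^sup>2)) + (\<epsilon> * (C * l2norm v))\<^sup>2"
    unfolding E using mult_left_mono[OF R \<epsilon>0] N by linarith
  also have "\<dots> = (1 - c\<^sup>2 / C\<^sup>2) * (l2norm v)\<^sup>2"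
    using C_pos unfolding \<epsilon>_def by (simp add: field_simps power2_eq_square)
  also have "\<dots> = (sqrt (1 - c\<^sup>2 / C\<^sup>2) * l2norm v)\<^sup>2"
  proof -
    have "c\<^sup>2 \<le> C\<^sup>2" using c_le_C c_pos by (intro power_mono) auto
    hence "0 \<le> 1 - c\<^sup>2 / C\<^sup>2" using C_pos by simp
    thus ?thesis by (simp add: power_mult_distrib)
  qed
  finally show ?thesis
    by (rule power2_le_imp_le) (intro mult_nonneg_nonneg real_sqrt_ge_zero l2norm_nonneg v,
        use c_le_C c_pos C_pos in \<open>auto intro!: power_mono simp: field_simps\<close>)
qed

lemma surjective:
  assumes b: "b \<in> l2"
  shows "\<exists>a\<in>l2. mat_apply M a = b"
proof -
  define \<epsilon> where "\<epsilon> = c / C\<^sup>2"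
  define e where "e = complex_of_real \<epsilon>"
  define q where "q = sqrt (1 - c\<^sup>2 / C\<^sup>2)"
  have \<epsilon>0: "\<epsilon> > 0" unfolding \<epsilon>_def using c_pos C_pos by simp
  have cC: "c\<^sup>2 / C\<^sup>2 > 0" using c_pos C_pos by simp
  have cC1: "c\<^sup>2 / C\<^sup>2 \<le> 1" using c_le_C c_pos C_pos by (simp add: power_mono)
  have q0: "0 \<le> q" unfolding q_def using cC1 by simp
  have q1: "q < 1" unfolding q_def using cC cC1 by simp
  define step where "step v = (\<lambda>k. v k + e * (b k - mat_apply M v k))" for v
  define A where "A n = (step ^^ n) (\<lambda>k. 0)" for n
  have AS: "A (Suc n) = step (A n)" for n by (simp add: A_def)
  have A0: "A 0 = (\<lambda>k. 0)" by (simp add: A_def)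
  have stepl2: "step v \<in> l2" if v: "v \<in> l2" for v
    unfolding step_def
    by (intro l2_add(1) v l2_scale(1) l2_diff(1) b bounded(1))
  have Al2: "A n \<in> l2" for n
    by (induction n) (auto simp: A0 AS l2_zero stepl2)
  define dd where "dd n = (\<lambda>k. A (Suc n) k - A n k)" for n
  have ddl2: "dd n \<in> l2" for n unfolding dd_def by (rule l2_diff(1)[OF Al2 Al2])
  have dd_eq: "dd n = (\<lambda>k. e * (b k - mat_apply M (A n) k))" for n
    by (simp add: dd_def AS step_def)
  have dd_rec: "dd (Suc n) = (\<lambda>k. dd n k - e * mat_apply M (dd n) k)" for n
  proof -
    have "mat_apply M (dd n) = (\<lambda>j. mat_apply M (A (Suc n)) j - mat_apply M (A n) j)"
      unfolding dd_def by (rule mat_diff[OF Al2 Al2])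
    thus ?thesis by (auto simp: dd_eq algebra_simps)
  qed
  have dd_bound: "l2norm (dd n) \<le> q ^ n * l2norm (dd 0)" for n
  proof (induction n)
    case 0 thus ?case by simp
  next
    case (Suc n)
    have "l2norm (dd (Suc n)) \<le> q * l2norm (dd n)"
      unfolding dd_rec e_def q_def \<epsilon>_def by (rule contraction[OF ddl2])
    also have "\<dots> \<le> q * (q ^ n * l2norm (dd 0))" by (rule mult_left_mono[OF Suc.IH q0])
    finally show ?case by simp
  qed
  have dd0: "l2norm (dd 0) = \<epsilon> * l2norm b"
  proof -
    have "dd 0 = (\<lambda>k. e * b k)" by (simp add: dd_eq A0 mat_zero)
    thus ?thesis using l2_scale(2)[OF b, of e] \<epsilon>0 by (simp add: e_def)
  qed
  have D: "l2norm (\<lambda>k. A (Suc n) k - A n k) \<le> (\<epsilon> * l2norm b) * q ^ n" for n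
  proof -
    have "l2norm (dd n) \<le> q ^ n * (\<epsilon> * l2norm b)" using dd_bound[of n] unfolding dd0 .
    thus ?thesis unfolding dd_def by (simp add: mult_ac)
  qed
  obtain a where a: "a \<in> l2"
    and close: "\<And>n. (\<lambda>k. a k - A n k) \<in> l2 \<and> l2norm (\<lambda>k. a k - A n k) \<le> (\<epsilon> * l2norm b) * q ^ n / (1 - q)"
    using l2_geom_limit[OF Al2 q0 q1 D] by blast
  define r where "r = (\<lambda>k. b k - mat_apply M a k)"
  have rl2: "r \<in> l2" unfolding r_def by (rule l2_diff(1)[OF b bounded(1)[OF a]])
  define K where "K = l2norm b + C * (\<epsilon> * l2norm b) / (1 - q)"
  have rK: "l2norm r \<le> K * q ^ n" for n
  proof -
    have res: "(\<lambda>k. b k - mat_apply M (A n) k) \<in> l2" by (rule l2_diff(1)[OF b bounded(1)[OF Al2]])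
    have Mdiff: "mat_apply M (\<lambda>k. a k - A n k) = (\<lambda>j. mat_apply M a j - mat_apply M (A n) j)"
      by (rule mat_diff[OF a Al2])
    have re: "r = (\<lambda>k. (b k - mat_apply M (A n) k) - mat_apply M (\<lambda>k. a k - A n k) k)"
      by (auto simp: r_def Mdiff)
    have "l2norm r \<le> l2norm (\<lambda>k. b k - mat_apply M (A n) k) + l2norm (mat_apply M (\<lambda>k. a k - A n k))"
      unfolding re by (rule l2_diff(2)[OF res bounded(1)[OF conjunct1[OF close]]])
    also have "l2norm (\<lambda>k. b k - mat_apply M (A n) k) = l2norm (dd n) / \<epsilon>"
    proof -
      have "l2norm (dd n) = \<epsilon> * l2norm (\<lambda>k. b k - mat_apply M (A n) k)"
        unfolding dd_eq using l2_scale(2)[OF res, of e] \<epsilon>0 by (simp add: e_def)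
      thus ?thesis using \<epsilon>0 by simp
    qed
    also have "l2norm (dd n) / \<epsilon> \<le> q ^ n * l2norm b"
      using dd_bound[of n] \<epsilon>0 by (simp add: dd0 field_simps)
    also have "l2norm (mat_apply M (\<lambda>k. a k - A n k)) \<le> C * ((\<epsilon> * l2norm b) * q ^ n / (1 - q))"
      using bounded(2)[OF conjunct1[OF close[of n]]] conjunct2[OF close[of n]] C_nonneg
      by (meson mult_left_mono order_trans)
    finally show ?thesis by (simp add: K_def field_simps)
  qed
  have "(\<lambda>n. K * q ^ n) \<longlonglongrightarrow> K * 0"
    by (intro tendsto_mult tendsto_const LIMSEQ_power_zero) (use q0 q1 in auto)
  hence "l2norm r \<le> 0" by (intro LIMSEQ_le_const[of _ 0]) (use rK in auto)
  hence "l2norm r = 0" using l2norm_nonneg[OF rl2] by linarith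
  hence "r k = 0" for k by (rule l2norm_eq0[OF rl2])
  hence "mat_apply M a = b" by (auto simp: r_def)
  thus ?thesis using a by blast
qed

lemma invertible: "invertible_mat_op M"
  unfolding invertible_mat_op_def
proof (intro conjI)
  show "\<exists>C. bounded_mat_op M C" using bounded_op by blast
  show "bij_betw (mat_apply M) l2 l2"
    unfolding bij_betw_def
  proof
    show "inj_on (mat_apply M) l2" by (rule injective)
    show "mat_apply M ` l2 = l2"
      using surjective bounded(1) by blast
  qed
  show "\<exists>c>0. \<forall>a\<in>l2. c * l2norm a \<le> l2norm (mat_apply M a)"
    using c_pos lower by blast
qed

end




lemma inner_pow_psd:
  fixes y :: "nat \<Rightarrow> 'a::euclidean_space"
  shows "0 \<le> (\<Sum>j\<in>F. \<Sum>k\<in>F. v j * v k * (y j \<bullet> y k) ^ m)"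
proof (induction m arbitrary: v)
  case 0
  have "(\<Sum>j\<in>F. \<Sum>k\<in>F. v j * v k * (y j \<bullet> y k) ^ 0) = (\<Sum>j\<in>F. v j) * (\<Sum>k\<in>F. v k)"
    by (simp add: sum_product)
  thus ?case by simp
next
  case (Suc m)
  have "(\<Sum>j\<in>F. \<Sum>k\<in>F. v j * v k * (y j \<bullet> y k) ^ Suc m)
      = (\<Sum>j\<in>F. \<Sum>k\<in>F. \<Sum>b\<in>Basis. (v j * (y j \<bullet> b)) * (v k * (y k \<bullet> b)) * (y j \<bullet> y k) ^ m)"
  proof (intro sum.cong refl)
    fix j k
    have "v j * v k * (y j \<bullet> y k) ^ Suc m = v j * v k * (y j \<bullet> y k) * (y j \<bullet> y k) ^ m" by (simp add: mult_ac)
    also have "\<dots> = v j * v k * (\<Sum>b\<in>Basis. (y j \<bullet> b) * (y k \<bullet> b)) * (y j \<bullet> y k) ^ m"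
      by (subst euclidean_inner) simp
    also have "\<dots> = (\<Sum>b\<in>Basis. (v j * (y j \<bullet> b)) * (v k * (y k \<bullet> b)) * (y j \<bullet> y k) ^ m)"
      by (simp add: sum_distrib_left sum_distrib_right mult_ac)
    finally show "v j * v k * (y j \<bullet> y k) ^ Suc m = \<dots>" .
  qed
  also have "\<dots> = (\<Sum>j\<in>F. \<Sum>b\<in>Basis. \<Sum>k\<in>F. (v j * (y j \<bullet> b)) * (v k * (y k \<bullet> b)) * (y j \<bullet> y k) ^ m)"
    by (rule sum.cong[OF refl], rule sum.swap)
  also have "\<dots> = (\<Sum>b\<in>Basis. \<Sum>j\<in>F. \<Sum>k\<in>F. (v j * (y j \<bullet> b)) * (v k * (y k \<bullet> b)) * (y j \<bullet> y k) ^ m)"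
    by (rule sum.swap)
  also have "\<dots> \<ge> 0" by (intro sum_nonneg Suc.IH)
  finally show ?case by simp
qed

lemma gauss_psd:
  fixes y :: "nat \<Rightarrow> 'a::euclidean_space" and u :: "nat \<Rightarrow> real"
  assumes F: "finite F" and t: "t \<ge> 0"
  shows "0 \<le> (\<Sum>j\<in>F. \<Sum>k\<in>F. u j * u k * exp (- (t * (norm (y j - y k))\<^sup>2)))"
proof -
  define v where "v j = u j * exp (- (t * (norm (y j))\<^sup>2))" for j
  have e: "u j * u k * exp (- (t * (norm (y j - y k))\<^sup>2)) = v j * v k * exp ((2 * t) * (y j \<bullet> y k))" for j k
  proof -
    have "(norm (y j - y k))\<^sup>2 = (norm (y j))\<^sup>2 + (norm (y k))\<^sup>2 - 2 * (y j \<bullet> y k)"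
      by (simp add: power2_norm_eq_inner inner_diff_left inner_diff_right inner_commute)
    hence "- (t * (norm (y j - y k))\<^sup>2) = - (t * ((norm (y j))\<^sup>2 + (norm (y k))\<^sup>2 - 2 * (y j \<bullet> y k)))"
      by (simp only:)
    also have "\<dots> = - (t * (norm (y j))\<^sup>2) + - (t * (norm (y k))\<^sup>2) + (2 * t) * (y j \<bullet> y k)"
      by (simp add: algebra_simps)
    finally have "- (t * (norm (y j - y k))\<^sup>2) = - (t * (norm (y j))\<^sup>2) + - (t * (norm (y k))\<^sup>2) + (2 * t) * (y j \<bullet> y k)" .
    hence "exp (- (t * (norm (y j - y k))\<^sup>2)) = exp (- (t * (norm (y j))\<^sup>2)) * exp (- (t * (norm (y k))\<^sup>2)) * exp ((2 * t) * (y j \<bullet> y k))"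
      by (simp only: exp_add)
    thus ?thesis unfolding v_def by (simp add: mult_ac)
  qed
  have ser: "(\<lambda>n. v j * v k * ((2 * t) ^ n / fact n * (y j \<bullet> y k) ^ n)) sums (v j * v k * exp ((2 * t) * (y j \<bullet> y k)))" for j k
  proof -
    have "(\<lambda>n. ((2 * t) * (y j \<bullet> y k)) ^ n /\<^sub>R fact n) sums exp ((2 * t) * (y j \<bullet> y k))"
      by (rule exp_converges)
    hence "(\<lambda>n. v j * v k * (((2 * t) * (y j \<bullet> y k)) ^ n /\<^sub>R fact n)) sums (v j * v k * exp ((2 * t) * (y j \<bullet> y k)))"
      by (rule sums_mult)
    thus ?thesis by (simp add: power_mult_distrib divide_inverse mult_ac)
  qed
  have S: "(\<lambda>n. \<Sum>j\<in>F. \<Sum>k\<in>F. v j * v k * ((2 * t) ^ n / fact n * (y j \<bullet> y k) ^ n))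
     sums (\<Sum>j\<in>F. \<Sum>k\<in>F. v j * v k * exp ((2 * t) * (y j \<bullet> y k)))"
    by (intro sums_sum ser)
  have nn: "0 \<le> (\<Sum>j\<in>F. \<Sum>k\<in>F. v j * v k * ((2 * t) ^ n / fact n * (y j \<bullet> y k) ^ n))" for n
  proof -
    have "(\<Sum>j\<in>F. \<Sum>k\<in>F. v j * v k * ((2 * t) ^ n / fact n * (y j \<bullet> y k) ^ n))
        = (2 * t) ^ n / fact n * (\<Sum>j\<in>F. \<Sum>k\<in>F. v j * v k * (y j \<bullet> y k) ^ n)"
      by (simp add: sum_distrib_left mult_ac)
    also have "\<dots> \<ge> 0" using t by (intro mult_nonneg_nonneg divide_nonneg_nonneg inner_pow_psd) auto
    finally show ?thesis .
  qed
  have "0 \<le> (\<Sum>j\<in>F. \<Sum>k\<in>F. v j * v k * exp ((2 * t) * (y j \<bullet> y k)))"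
    by (rule sums_le[OF nn sums_zero S])
  also have "\<dots> = (\<Sum>j\<in>F. \<Sum>k\<in>F. u j * u k * exp (- (t * (norm (y j - y k))\<^sup>2)))"
    by (intro sum.cong refl e[symmetric])
  finally show ?thesis .
qed

lemma offdiag_lower:
  fixes h :: "nat \<Rightarrow> nat \<Rightarrow> real" and u :: "nat \<Rightarrow> real"
  assumes F: "finite F" and h0: "\<And>j k. h j k \<ge> 0" and hs: "\<And>j k. h j k = h k j"
    and hb: "\<And>j. j \<in> F \<Longrightarrow> (\<Sum>k\<in>F. h j k) \<le> \<epsilon>"
  shows "- (\<epsilon> * (\<Sum>j\<in>F. (u j)\<^sup>2)) \<le> (\<Sum>j\<in>F. \<Sum>k\<in>F. u j * u k * h j k)"
proof -
  have pt: "- (((u j)\<^sup>2 + (u k)\<^sup>2) / 2 * h j k) \<le> u j * u k * h j k" for j k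
  proof -
    have "0 \<le> (u j + u k)\<^sup>2" by simp
    hence "0 \<le> (u j)\<^sup>2 + (u k)\<^sup>2 + 2 * (u j * u k)" by (simp add: power2_sum)
    hence X: "- (((u j)\<^sup>2 + (u k)\<^sup>2) / 2) \<le> u j * u k" by (simp add: field_simps)
    show ?thesis using mult_right_mono[OF X h0[of j k]] by simp
  qed
  have sw: "(\<Sum>j\<in>F. \<Sum>k\<in>F. (u k)\<^sup>2 * h j k) = (\<Sum>j\<in>F. \<Sum>k\<in>F. (u j)\<^sup>2 * h j k)"
    by (subst sum.swap) (simp add: hs)
  have "(\<Sum>j\<in>F. \<Sum>k\<in>F. ((u j)\<^sup>2 + (u k)\<^sup>2) / 2 * h j k)
      = (\<Sum>j\<in>F. \<Sum>k\<in>F. (u j)\<^sup>2 * h j k / 2 + (u k)\<^sup>2 * h j k / 2)"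
    by (intro sum.cong refl) (simp add: field_simps)
  also have "\<dots> = (\<Sum>j\<in>F. \<Sum>k\<in>F. (u j)\<^sup>2 * h j k / 2) + (\<Sum>j\<in>F. \<Sum>k\<in>F. (u k)\<^sup>2 * h j k / 2)"
    by (simp only: sum.distrib)
  also have "\<dots> = ((\<Sum>j\<in>F. \<Sum>k\<in>F. (u j)\<^sup>2 * h j k) + (\<Sum>j\<in>F. \<Sum>k\<in>F. (u k)\<^sup>2 * h j k)) / 2"
    by (simp only: sum_divide_distrib add_divide_distrib)
  also have "\<dots> = (\<Sum>j\<in>F. \<Sum>k\<in>F. (u j)\<^sup>2 * h j k)" by (simp only: sw) simp
  also have "\<dots> = (\<Sum>j\<in>F. (u j)\<^sup>2 * (\<Sum>k\<in>F. h j k))" by (simp only: sum_distrib_left)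
  also have "\<dots> \<le> (\<Sum>j\<in>F. (u j)\<^sup>2 * \<epsilon>)" by (intro sum_mono mult_left_mono hb) auto
  also have "\<dots> = \<epsilon> * (\<Sum>j\<in>F. (u j)\<^sup>2)" by (simp add: sum_distrib_left mult_ac)
  finally have "- (\<epsilon> * (\<Sum>j\<in>F. (u j)\<^sup>2)) \<le> - (\<Sum>j\<in>F. \<Sum>k\<in>F. ((u j)\<^sup>2 + (u k)\<^sup>2) / 2 * h j k)" by simp
  also have "\<dots> = (\<Sum>j\<in>F. \<Sum>k\<in>F. - (((u j)\<^sup>2 + (u k)\<^sup>2) / 2 * h j k))" by (simp add: sum_negf)
  also have "\<dots> \<le> (\<Sum>j\<in>F. \<Sum>k\<in>F. u j * u k * h j k)" by (intro sum_mono pt)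
  finally show ?thesis .
qed

lemma gauss_lower:
  fixes x :: "nat \<Rightarrow> real^'n" and u :: "nat \<Rightarrow> real"
  assumes dimX: "dim (span (range x)) = d" and d1: "1 \<le> d" and dn: "d \<le> CARD('n)" and \<delta>: "\<delta> > 0"
    and sep: "\<And>k l. k \<noteq> l \<Longrightarrow> \<delta> \<le> dist (x k) (x l)"
    and F: "finite F" and t: "t > 0"
    and small: "((5 ^ d - 1) / \<delta> ^ d) * Gamma (real d / 2 + 1) * t powr (- (real d / 2)) \<le> 1/2"
  shows "(1/2) * (\<Sum>j\<in>F. (u j)\<^sup>2) \<le> (\<Sum>j\<in>F. \<Sum>k\<in>F. u j * u k * exp (- (t * (norm (x j - x k))\<^sup>2)))"
proof -
  define \<epsilon> where "\<epsilon> = ((5 ^ d - 1) / \<delta> ^ d) * Gamma (real d / 2 + 1) * t powr (- (real d / 2))"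
  define h where "h j k = (if j = k then 0 else exp (- (t * (norm (x j - x k))\<^sup>2)))" for j k
  have h0: "h j k \<ge> 0" for j k by (simp add: h_def)
  have hs: "h j k = h k j" for j k by (simp add: h_def norm_minus_commute)
  have hb: "(\<Sum>k\<in>F. h j k) \<le> \<epsilon>" if j: "j \<in> F" for j
  proof -
    have "(\<Sum>k\<in>F. h j k) = (\<Sum>k\<in>F - {j}. exp (- (t * (norm (x j - x k))\<^sup>2)))"
      using F j by (simp add: h_def sum.If_cases Diff_eq Int_commute)
    also have "\<dots> \<le> \<epsilon>" unfolding \<epsilon>_def
    proof (rule gauss_sum_bound[where s = "\<lambda>k. norm (x j - x k)"])
      show "finite (F - {j})" using F by simp
      fix v :: real assume "v \<ge> 0"
      thus "real (card {k \<in> F - {j}. (norm (x j - x k))\<^sup>2 \<le> v}) \<le> ((5 ^ d - 1) / \<delta> ^ d) * v powr (real d / 2)"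
        by (intro count_bound[OF dimX d1 dn \<delta> sep]) (use F in auto)
    qed (use d1 t in auto)
    finally show ?thesis .
  qed
  have e: "exp (- (t * (norm (x j - x k))\<^sup>2)) = (if j = k then 1 else 0) + h j k" for j k
    by (simp add: h_def)
  have "(\<Sum>j\<in>F. \<Sum>k\<in>F. u j * u k * exp (- (t * (norm (x j - x k))\<^sup>2)))
      = (\<Sum>j\<in>F. \<Sum>k\<in>F. u j * u k * (if j = k then 1 else 0)) + (\<Sum>j\<in>F. \<Sum>k\<in>F. u j * u k * h j k)"
    by (simp only: e distrib_left sum.distrib)
  also have "(\<Sum>j\<in>F. \<Sum>k\<in>F. u j * u k * (if j = k then 1 else 0)) = (\<Sum>j\<in>F. (u j)\<^sup>2)"
    using F by (simp add: power2_eq_square if_distrib sum.delta cong: if_cong)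
  finally have X: "(\<Sum>j\<in>F. \<Sum>k\<in>F. u j * u k * exp (- (t * (norm (x j - x k))\<^sup>2)))
      = (\<Sum>j\<in>F. (u j)\<^sup>2) + (\<Sum>j\<in>F. \<Sum>k\<in>F. u j * u k * h j k)" .
  have "- (\<epsilon> * (\<Sum>j\<in>F. (u j)\<^sup>2)) \<le> (\<Sum>j\<in>F. \<Sum>k\<in>F. u j * u k * h j k)"
    by (rule offdiag_lower[OF F h0 hs hb])
  moreover have "\<epsilon> * (\<Sum>j\<in>F. (u j)\<^sup>2) \<le> (1/2) * (\<Sum>j\<in>F. (u j)\<^sup>2)"
    using small by (intro mult_right_mono) (auto simp: \<epsilon>_def intro: sum_nonneg)
  ultimately show ?thesis unfolding X by linarith
qed

lemma phi_finite_lower: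
  fixes x :: "nat \<Rightarrow> real^'n"
  assumes dimX: "dim (span (range x)) = d" and d1: "1 \<le> d" and dn: "d \<le> CARD('n)" and \<delta>: "\<delta> > 0"
    and sep: "\<And>k l. k \<noteq> l \<Longrightarrow> \<delta> \<le> dist (x k) (x l)" and \<beta>: "\<beta> > real d / 2"
  shows "\<exists>c>0. \<forall>N u. c * (\<Sum>j<N. (u j)\<^sup>2) \<le> (\<Sum>j<N. \<Sum>k<N. u j * u k * phi_beta \<beta> (norm (x j - x k)))"
proof -
  define K1 where "K1 = ((5 ^ d - 1) / \<delta> ^ d) * Gamma (real d / 2 + 1)"
  have K1: "K1 \<ge> 0" unfolding K1_def using \<delta> four_five[OF d1] d1
    by (intro mult_nonneg_nonneg divide_nonneg_pos Gamma_real_nonneg) (auto intro: order_trans[of 0 "4^d"])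
  define T where "T = 1 + (2 * K1) powr (2 / real d)"
  have T1: "T \<ge> 1" unfolding T_def by simp
  have small: "K1 * t powr (- (real d / 2)) \<le> 1/2" if t: "t \<ge> T" for t
  proof -
    have tpos: "t > 0" using t T1 by simp
    have "2 * K1 = ((2 * K1) powr (2 / real d)) powr (real d / 2)"
      using K1 d1 by (simp add: powr_powr)
    also have "\<dots> \<le> t powr (real d / 2)"
      by (rule powr_mono2) (use t T1 in \<open>auto simp: T_def\<close>)
    finally have A: "K1 \<le> (1/2) * t powr (real d / 2)" by simp
    have "K1 * t powr (- (real d / 2)) \<le> ((1/2) * t powr (real d / 2)) * t powr (- (real d / 2))"
      by (rule mult_right_mono[OF A]) simp
    also have "\<dots> = 1/2" using tpos by (simp add: powr_add[symmetric])
    finally show ?thesis .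
  qed
  define \<kappa> where "\<kappa> = min (T powr (\<beta> - 1)) ((T + 1) powr (\<beta> - 1)) * exp (- (T + 1))"
  have \<kappa>: "\<kappa> > 0" unfolding \<kappa>_def using T1 by simp
  have \<beta>0: "\<beta> > 0" using \<beta> d1 by (smt (verit) divide_nonneg_nonneg of_nat_0_le_iff)
  have G\<beta>: "Gamma \<beta> > 0" by (rule Gamma_real_pos[OF \<beta>0])
  define c where "c = \<kappa> / (2 * Gamma \<beta>)"
  have c: "c > 0" unfolding c_def using \<kappa> G\<beta> by simp
  have main: "c * (\<Sum>j<N. (u j)\<^sup>2) \<le> (\<Sum>j<N. \<Sum>k<N. u j * u k * phi_beta \<beta> (norm (x j - x k)))" for N u
  proof -
    define S where "S = (\<Sum>j<N. (u j)\<^sup>2)"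
    have S0: "S \<ge> 0" unfolding S_def by (intro sum_nonneg) auto
    define w where "w t = t powr (\<beta> - 1) * exp (- t)" for t :: real
    define Q where "Q t = (\<Sum>j<N. \<Sum>k<N. u j * u k * exp (- (t * (norm (x j - x k))\<^sup>2)))" for t
    have I1: "((\<lambda>t. \<Sum>j<N. \<Sum>k<N. u j * u k * (t powr (\<beta> - 1) * exp (- t) * exp (- (t * (norm (x j - x k))\<^sup>2))))
        has_integral (\<Sum>j<N. \<Sum>k<N. u j * u k * (Gamma \<beta> * (1 + (norm (x j - x k))\<^sup>2) powr (- \<beta>)))) {0..}"
      by (intro has_integral_sum finite_lessThan has_integral_mult_right phi_Gamma \<beta>0)
    have I2: "((\<lambda>t. if t \<in> {T..T+1} then (1/2) * S * \<kappa> else 0) has_integral ((1/2) * S * \<kappa>)) {0..}"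
    proof -
      have "((\<lambda>t. (1/2) * S * \<kappa>) has_integral ((1/2) * S * \<kappa>) * (T + 1 - T)) {T..T+1}"
        using has_integral_const_real[of "(1/2) * S * \<kappa>" T "T+1"] by simp
      hence "((\<lambda>t. (1/2) * S * \<kappa>) has_integral ((1/2) * S * \<kappa>)) {T..T+1}" by simp
      thus ?thesis using T1 by (subst has_integral_restrict) auto
    qed
    have le: "(if t \<in> {T..T+1} then (1/2) * S * \<kappa> else 0)
        \<le> (\<Sum>j<N. \<Sum>k<N. u j * u k * (t powr (\<beta> - 1) * exp (- t) * exp (- (t * (norm (x j - x k))\<^sup>2))))"
      if t0: "t \<in> {0..}" for t
    proof -
      have R: "(\<Sum>j<N. \<Sum>k<N. u j * u k * (t powr (\<beta> - 1) * exp (- t) * exp (- (t * (norm (x j - x k))\<^sup>2))))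
          = w t * Q t"
        by (simp add: w_def Q_def sum_distrib_left mult_ac)
      have w0: "w t \<ge> 0" by (simp add: w_def)
      have Q0: "Q t \<ge> 0" unfolding Q_def by (rule gauss_psd) (use t0 in auto)
      show ?thesis
      proof (cases "t \<in> {T..T+1}")
        case False
        hence "(if t \<in> {T..T+1} then (1/2) * S * \<kappa> else 0) = 0" by (simp only: if_False)
        thus ?thesis unfolding R using w0 Q0 by simp
      next
        case True
        hence tT: "T \<le> t" "t \<le> T + 1" by auto
        have tpos: "t > 0" using tT T1 by simp
        have sm: "((5 ^ d - 1) / \<delta> ^ d) * Gamma (real d / 2 + 1) * t powr (- (real d / 2)) \<le> 1/2"
          using small[OF tT(1)] by (simp only: K1_def)
        have Qb: "(1/2) * S \<le> Q t" unfolding S_def Q_def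
          by (rule gauss_lower[OF dimX d1 dn \<delta> sep finite_lessThan tpos sm])
        have pw: "min (T powr (\<beta> - 1)) ((T + 1) powr (\<beta> - 1)) \<le> t powr (\<beta> - 1)"
        proof (cases "\<beta> - 1 \<ge> 0")
          case True
          have "T powr (\<beta> - 1) \<le> t powr (\<beta> - 1)" by (rule powr_mono2[OF True]) (use T1 tT in auto)
          thus ?thesis by simp
        next
          case False
          have "(T + 1) powr (\<beta> - 1) \<le> t powr (\<beta> - 1)" by (rule powr_mono2') (use False tpos tT in auto)
          thus ?thesis by simp
        qed
        have ex: "exp (- (T + 1)) \<le> exp (- t)" using tT by simp
        have wk: "\<kappa> \<le> w t" unfolding \<kappa>_def w_def
          by (rule mult_mono[OF pw ex]) (auto simp: T1)
        have "(1/2) * S * \<kappa> \<le> Q t * w t"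
          by (rule mult_mono[OF Qb wk]) (use S0 \<kappa> Q0 in auto)
        thus ?thesis unfolding R using True by (simp add: mult_ac)
      qed
    qed
    have "(1/2) * S * \<kappa> \<le> (\<Sum>j<N. \<Sum>k<N. u j * u k * (Gamma \<beta> * (1 + (norm (x j - x k))\<^sup>2) powr (- \<beta>)))"
      by (rule has_integral_le[OF I2 I1 le])
    also have "\<dots> = Gamma \<beta> * (\<Sum>j<N. \<Sum>k<N. u j * u k * phi_beta \<beta> (norm (x j - x k)))"
      by (simp add: phi_beta_def sum_distrib_left mult_ac)
    finally have "(1/2) * S * \<kappa> \<le> Gamma \<beta> * (\<Sum>j<N. \<Sum>k<N. u j * u k * phi_beta \<beta> (norm (x j - x k)))" .
    thus ?thesis using G\<beta> unfolding c_def S_def by (simp add: field_simps)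
  qed
  show ?thesis using c main by blast
qed


theorem theorem5p3:
  fixes x :: "nat \<Rightarrow> real ^ 'n" and \<beta> :: real and d :: nat
  assumes beta: "\<beta> > real CARD('n) / 2"
    and inj: "inj x"
    and sep: "sep_dist x > 0"
    and dimX: "dim (span (range x)) = d"
    and d: "1 \<le> d" "d \<le> CARD('n)"
  shows "bounded_mat_op (S_mat \<beta> x)
           (1 + real d * (5 ^ d - 1) * Beta (\<beta> - real d / 2) (real d / 2)
                / (2 * sep_dist x ^ d))
       \<and> selfadjoint_mat_op (S_mat \<beta> x)
       \<and> (CARD('n) \<ge> 2 \<longrightarrow> invertible_mat_op (S_mat \<beta> x))
       \<and> (CARD('n) = 1 \<and> d = 1 \<and> sep_dist x > 2 * Beta (\<beta> - 1/2) (1/2)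
            \<longrightarrow> invertible_mat_op (S_mat \<beta> x))"
proof -
  define \<delta> where "\<delta> = sep_dist x"
  have \<delta>: "\<delta> > 0" using sep by (simp add: \<delta>_def)
  have sepk: "\<delta> \<le> dist (x k) (x l)" if "k \<noteq> l" for k l
  proof -
    have "bdd_below {dist (x j) (x k) | j k. j \<noteq> k}"
      by (rule bdd_belowI[of _ 0]) auto
    moreover have "dist (x k) (x l) \<in> {dist (x j) (x k) | j k. j \<noteq> k}" using that by blast
    ultimately show ?thesis unfolding \<delta>_def sep_dist_def by (rule cInf_lower[rotated])
  qed
  have \<beta>d: "\<beta> > real d / 2"
  proof -
    have "real d / 2 \<le> real CARD('n) / 2" using d(2) by simp
    thus ?thesis using beta by linarith
  qed
  define K where "K = real d * (5 ^ d - 1) * Beta (\<beta> - real d / 2) (real d / 2) / (2 * \<delta> ^ d)"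
  define m where "m j k = phi_beta \<beta> (norm (x j - x k))" for j k
  have mjj: "m j j = 1" for j by (simp add: m_def phi_beta_def)
  have rows: "(\<Sum>k\<in>F. m j k) \<le> 1 + K" if F: "finite F" for j F
  proof -
    have rb: "(\<Sum>k\<in>F - {j}. m j k) \<le> K"
      unfolding m_def K_def by (rule row_bound[OF dimX d(1) d(2) \<delta> sepk \<beta>d]) (use F in auto)
    show ?thesis
    proof (cases "j \<in> F")
      case True
      have "(\<Sum>k\<in>F. m j k) = m j j + (\<Sum>k\<in>F - {j}. m j k)" by (rule sum.remove[OF F True])
      thus ?thesis using rb mjj by simp
    next
      case False
      hence "F - {j} = F" by auto
      hence "(\<Sum>k\<in>F. m j k) \<le> K" using rb by simp
      thus ?thesis by simp
    qed
  qed
  have nn: "m j k \<ge> 0" for j k by (simp add: m_def phi_beta_def)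
  have sym: "m j k = m k j" for j k by (simp add: m_def norm_minus_commute)
  interpret s: schur m "1 + K" by unfold_locales (use nn sym rows in auto)
  have SM: "S_mat \<beta> x = s.M" by (auto simp: S_mat_def s.M_def m_def fun_eq_iff)
  obtain c where c: "c > 0"
    and fin: "\<And>N u. c * (\<Sum>j<N. (u j)\<^sup>2) \<le> (\<Sum>j<N. \<Sum>k<N. u j * u k * m j k)"
    using phi_finite_lower[OF dimX d(1) d(2) \<delta> sepk \<beta>d] unfolding m_def by blast
  interpret cs: coercive m "1 + K" c
    by unfold_locales (use c s.coercive_from_finite[OF c fin] in auto)
  have inv: "invertible_mat_op (S_mat \<beta> x)" unfolding SM by (rule cs.invertible)
  have "bounded_mat_op (S_mat \<beta> x) (1 + K)" unfolding SM by (rule s.bounded_op)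
  moreover have "selfadjoint_mat_op (S_mat \<beta> x)" unfolding SM by (rule s.selfadjoint)
  ultimately show ?thesis using inv by (simp add: K_def \<delta>_def)
qed

end
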